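(* Let $(\psi,v)$ be a (sufficiently smooth) solution of $$-i\gamma^\mu\partial_\mu\psi=v\psi,\qquad -\Box v+v=\psi^*\gamma^0\psi\quad\text{on }[0,\infty)\times\mathbb{R}^2,$$ and let $\Psi$ solve $-\Box\Psi=i\gamma^\mu\partial_\mu\psi$ on $[0,\infty)\times\mathbb{R}^2$ with $(\Psi,\partial_t\Psi)|_{t=0}=(0,i\gamma^0\psi(0,\cdot))$ (so that $-i\gamma^\mu\partial_\mu\Psi=\psi$). Then: (i) with $\widetilde\psi=\psi+i\gamma^\mu\partial_\mu(v\psi)$, one has $-i\gamma^\mu\partial_\mu\widetilde\psi=\mathcal{N}_1(\psi,v)+\mathcal{N}_2(\psi,\psi^* )+2Q_0(\psi,v)$; (ii) with $\widetilde\Psi=\Psi-v\psi$, one has $-\Box\widetilde\Psi=-\mathcal{N}_1(\psi,v)-\mathcal{N}_2(\psi,\psi^* )-2Q_0(\psi,v)$; (iii) with $\tilde v=v-\psi^*\gamma^0\psi$, one has $-\Box\tilde v+\tilde v=\mathcal{N}_3(\psi,v)+\mathcal{N}_4(\psi,\psi^* )$; (iv) for every $I\in\mathbb{N}^6$, $\big[\widehat\Gamma^I\psi\big]_-=-i\big(I_2-\omega_a\gamma^0\gamma^a\big)\gamma^bG_b\widehat\Gamma^I\Psi$.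
   Context: Coordinates $(t,x)=(x_0,x_1,x_2)$, $r=|x|$, $\omega_a=x_a/r$, summation over repeated indices (Greek in $\{0,1,2\}$, Latin in $\{1,2\}$), $\eta=\mathrm{diag}(-1,1,1)$, $\Box=\eta^{\alpha\beta}\partial_\alpha\partial_\beta$, $\partial^\alpha=\eta^{\alpha\beta}\partial_\beta$. Dirac matrices: $\gamma^0=\begin{pmatrix}1&0\\0&-1\end{pmatrix}$, $\gamma^1=\begin{pmatrix}0&1\\-1&0\end{pmatrix}$, $\gamma^2=\begin{pmatrix}0&-i\\-i&0\end{pmatrix}$; $A^*$ is the conjugate transpose; $I_2$ the identity. Null form: $Q_0(f,g)=\partial_tf\,\partial_tg-\partial_af\,\partial_ag$. Nonlinearities: $\mathcal{N}_1(\psi,v)=i\,v\gamma^\mu\partial_\mu(v\psi)$, $\mathcal{N}_2(\psi,\psi^* )=(\psi^*\gamma^0\psi)\psi$, $\mathcal{N}_3(\psi,v)=i\,\partial_\mu(v\psi^* )\gamma^0\gamma^\mu\psi-i\,\psi^*\gamma^0\gamma^\mu\partial_\mu(v\psi)$, $\mathcal{N}_4(\psi,\psi^* )=2\eta^{\alpha\beta}\partial_\alpha\psi^*\gamma^0\partial_\beta\psi$. For $\phi:\mathbb{R}^{1+2}\to\mathbb{C}^2$, $[\phi]_-=\phi-\omega_a\gamma^0\gamma^a\phi$. Good derivatives $G_a=\partial_a+\omega_a\partial_t$. Modified vector fields: $\widehat\Omega=x_1\partial_2-x_2\partial_1-\tfrac12\gamma^1\gamma^2$, $\widehat L_a=t\partial_a+x_a\partial_t-\tfrac12\gamma^0\gamma^a$;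 $(\widehat\Gamma_1,\dots,\widehat\Gamma_6)=(\partial_t,\partial_1,\partial_2,\widehat\Omega,\widehat L_1,\widehat L_2)$, $\widehat\Gamma^I=\prod_k\widehat\Gamma_k^{i_k}$ for $I=(i_1,\dots,i_6)$. *)

theory Defs
  imports "HOL-Analysis.Analysis"
begin

text \<open>Spacetime points p = (t, x1, x2) :: real \<times> real \<times> real.
  Spinors take values in complex^2, 2x2 complex matrices are complex^2^2.\<close>

type_synonym pt = "real \<times> real \<times> real"
type_synonym spinor = "complex ^ 2"
type_synonym cmat = "complex ^ 2 ^ 2"

definition Hs :: "pt set" where
  "Hs = {p. fst p \<ge> 0}"

definition coord :: "nat \<Rightarrow> pt \<Rightarrow> real" where
  "coord \<mu> p = (if \<mu> = 0 then fst p else if \<mu> = 1 then fst (snd p) else snd (snd p))"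

definition dir :: "nat \<Rightarrow> pt" where
  "dir \<mu> = (if \<mu> = 0 then (1,0,0) else if \<mu> = 1 then (0,1,0) else (0,0,1))"

definition rad :: "pt \<Rightarrow> real" where
  "rad p = sqrt ((coord 1 p)\<^sup>2 + (coord 2 p)\<^sup>2)"

definition omega :: "nat \<Rightarrow> pt \<Rightarrow> real" where
  "omega a p = coord a p / rad p"

text \<open>Partial derivative \<partial>_\<mu> on the half space (one-sided in t at t = 0).\<close>
definition pd :: "nat \<Rightarrow> (pt \<Rightarrow> 'b::real_normed_vector) \<Rightarrow> pt \<Rightarrow> 'b" where
  "pd \<mu> f p = vector_derivative (\<lambda>s. f (p + s *\<^sub>R dir \<mu>))
                 (at 0 within {s. p + s *\<^sub>R dir \<mu> \<in> Hs})"

fun pds :: "nat list \<Rightarrow> (pt \<Rightarrow> 'b::real_normed_vector) \<Rightarrow> pt \<Rightarrow> 'b" where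
  "pds [] f = f"
| "pds (\<mu> # ds) f = pd \<mu> (pds ds f)"

definition smooth_H :: "(pt \<Rightarrow> 'b::real_normed_vector) \<Rightarrow> bool" where
  "smooth_H f \<longleftrightarrow> (\<forall>ds. set ds \<subseteq> {0,1,2} \<longrightarrow> pds ds f differentiable_on Hs)"

definition eta :: "nat \<Rightarrow> nat \<Rightarrow> real" where
  "eta \<alpha> \<beta> = (if \<alpha> \<noteq> \<beta> then 0 else if \<alpha> = 0 then -1 else 1)"

definition Box :: "(pt \<Rightarrow> 'b::real_normed_vector) \<Rightarrow> pt \<Rightarrow> 'b" where
  "Box f p = (\<Sum>\<alpha><3. \<Sum>\<beta><3. eta \<alpha> \<beta> *\<^sub>R pd \<alpha> (pd \<beta> f) p)"

definition gam :: "nat \<Rightarrow> cmat" where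
  "gam \<mu> = (if \<mu> = 0 then vector [vector [1, 0], vector [0, -1]]
            else if \<mu> = 1 then vector [vector [0, 1], vector [-1, 0]]
            else vector [vector [0, -\<i>], vector [-\<i>, 0]])"

definition hdot :: "spinor \<Rightarrow> spinor \<Rightarrow> complex" where
  "hdot u w = (\<Sum>j\<in>UNIV. cnj (u $ j) * w $ j)"

definition dirac :: "(pt \<Rightarrow> spinor) \<Rightarrow> pt \<Rightarrow> spinor" where
  "dirac f p = (\<Sum>\<mu><3. gam \<mu> *v pd \<mu> f p)"

definition smul :: "(pt \<Rightarrow> real) \<Rightarrow> (pt \<Rightarrow> spinor) \<Rightarrow> pt \<Rightarrow> spinor" where
  "smul v f = (\<lambda>p. v p *\<^sub>R f p)"

definition Q0 :: "(pt \<Rightarrow> spinor) \<Rightarrow> (pt \<Rightarrow> real) \<Rightarrow> pt \<Rightarrow> spinor" where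
  "Q0 f g p = pd 0 g p *\<^sub>R pd 0 f p - (\<Sum>a\<in>{1,2}. pd a g p *\<^sub>R pd a f p)"

definition N1 :: "(pt \<Rightarrow> spinor) \<Rightarrow> (pt \<Rightarrow> real) \<Rightarrow> pt \<Rightarrow> spinor" where
  "N1 \<psi> v p = \<i> *s (v p *\<^sub>R dirac (smul v \<psi>) p)"

definition N2 :: "(pt \<Rightarrow> spinor) \<Rightarrow> pt \<Rightarrow> spinor" where
  "N2 \<psi> p = hdot (\<psi> p) (gam 0 *v \<psi> p) *s \<psi> p"

text \<open>Note \<partial>_\<mu>(v \<psi>^*) = (\<partial>_\<mu>(v \<psi>))^*, so \<partial>_\<mu>(v\<psi>^*) M \<psi> = hdot (\<partial>_\<mu>(v\<psi>)) (M \<psi>).\<close>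
definition N3 :: "(pt \<Rightarrow> spinor) \<Rightarrow> (pt \<Rightarrow> real) \<Rightarrow> pt \<Rightarrow> complex" where
  "N3 \<psi> v p = (\<Sum>\<mu><3. \<i> * hdot (pd \<mu> (smul v \<psi>) p) ((gam 0 ** gam \<mu>) *v \<psi> p)
                     - \<i> * hdot (\<psi> p) ((gam 0 ** gam \<mu>) *v pd \<mu> (smul v \<psi>) p))"

definition N4 :: "(pt \<Rightarrow> spinor) \<Rightarrow> pt \<Rightarrow> complex" where
  "N4 \<psi> p = 2 * (\<Sum>\<alpha><3. \<Sum>\<beta><3. of_real (eta \<alpha> \<beta>) * hdot (pd \<alpha> \<psi> p) (gam 0 *v pd \<beta> \<psi> p))"

definition minus_part :: "(pt \<Rightarrow> spinor) \<Rightarrow> pt \<Rightarrow> spinor" where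
  "minus_part \<phi> p = \<phi> p - (\<Sum>a\<in>{1,2}. omega a p *\<^sub>R ((gam 0 ** gam a) *v \<phi> p))"

definition Gd :: "nat \<Rightarrow> (pt \<Rightarrow> spinor) \<Rightarrow> pt \<Rightarrow> spinor" where
  "Gd a f p = pd a f p + omega a p *\<^sub>R pd 0 f p"

text \<open>Modified vector fields \<Gamma>_1..\<Gamma>_6 = \<partial>_t, \<partial>_1, \<partial>_2, \<Omega>hat, Lhat_1, Lhat_2.\<close>
definition Gamk :: "nat \<Rightarrow> (pt \<Rightarrow> spinor) \<Rightarrow> pt \<Rightarrow> spinor" where
  "Gamk k f p =
    (if k = 1 then pd 0 f p
     else if k = 2 then pd 1 f p
     else if k = 3 then pd 2 f p
     else if k = 4 then coord 1 p *\<^sub>R pd 2 f p - coord 2 p *\<^sub>R pd 1 f p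
                        - (1/2 :: real) *\<^sub>R ((gam 1 ** gam 2) *v f p)
     else if k = 5 then coord 0 p *\<^sub>R pd 1 f p + coord 1 p *\<^sub>R pd 0 f p
                        - (1/2 :: real) *\<^sub>R ((gam 0 ** gam 1) *v f p)
     else coord 0 p *\<^sub>R pd 2 f p + coord 2 p *\<^sub>R pd 0 f p
                        - (1/2 :: real) *\<^sub>R ((gam 0 ** gam 2) *v f p))"

text \<open>\<Gamma>^I = \<Gamma>_1^{i_1} \<circ> \<Gamma>_2^{i_2} \<circ> ... \<circ> \<Gamma>_6^{i_6}, multi-index I given by I 1, ..., I 6.\<close>
definition GamI :: "(nat \<Rightarrow> nat) \<Rightarrow> (pt \<Rightarrow> spinor) \<Rightarrow> pt \<Rightarrow> spinor" where
  "GamI I = foldr (\<lambda>k g. (Gamk k ^^ I k) \<circ> g) [1..<7] id"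

end

theory Submission
  imports Defs
begin


lemma Hs_iff: "p \<in> Hs \<longleftrightarrow> fst p \<ge> 0" by (simp add: Hs_def)

lemma fst_dir_nonneg: "fst (dir \<mu>) \<ge> 0" by (simp add: dir_def)

lemma line_in_Hs: "q \<in> Hs \<Longrightarrow> x \<ge> 0 \<Longrightarrow> q + x *\<^sub>R dir \<mu> \<in> Hs"
  using fst_dir_nonneg[of \<mu>] by (simp add: Hs_def)

lemma at0_Sdir_nonbot:
  assumes "q \<in> Hs"
  shows "at 0 within {s. q + s *\<^sub>R dir \<mu> \<in> Hs} \<noteq> bot"
proof -
  have "{0..1::real} \<subseteq> {s. q + s *\<^sub>R dir \<mu> \<in> Hs}" using line_in_Hs[OF assms] by auto
  moreover have "(0::real) islimpt {0..1}" by (simp add: islimpt_Icc)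
  ultimately have "(0::real) islimpt {s. q + s *\<^sub>R dir \<mu> \<in> Hs}" by (rule islimpt_subset[rotated])
  then show ?thesis by (simp add: trivial_limit_within)
qed

lemma line_deriv: "((\<lambda>x. q' + x *\<^sub>R dir \<mu>) has_derivative (\<lambda>h. h *\<^sub>R dir \<mu>)) (at x0 within A)"
  by (auto intro!: derivative_eq_intros)

lemma slice_deriv:
  assumes f': "(f has_derivative f') (at (q' + x0 *\<^sub>R dir \<mu>) within Hs)"
    and A: "\<And>x. x \<in> A \<Longrightarrow> q' + x *\<^sub>R dir \<mu> \<in> Hs"
  shows "((\<lambda>x. f (q' + x *\<^sub>R dir \<mu>)) has_vector_derivative f' (dir \<mu>)) (at x0 within A)"
proof -
  have sub: "(\<lambda>x. q' + x *\<^sub>R dir \<mu>) ` A \<subseteq> Hs" using A by auto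
  have "(f has_derivative f') (at ((\<lambda>x. q' + x *\<^sub>R dir \<mu>) x0) within (\<lambda>x. q' + x *\<^sub>R dir \<mu>) ` A)"
    using has_derivative_subset[OF f' sub] by simp
  from diff_chain_within[OF line_deriv this]
  have "((\<lambda>x. f (q' + x *\<^sub>R dir \<mu>)) has_derivative (\<lambda>h. f' (h *\<^sub>R dir \<mu>))) (at x0 within A)"
    by (simp add: o_def)
  moreover have "(\<lambda>h. f' (h *\<^sub>R dir \<mu>)) = (\<lambda>h. h *\<^sub>R f' (dir \<mu>))"
    using has_derivative_bounded_linear[OF f'] by (simp add: linear_simps)
  ultimately show ?thesis by (simp add: has_vector_derivative_def)
qed

lemma pd_eq:
  assumes q: "q \<in> Hs" and f': "(f has_derivative f') (at q within Hs)"
  shows "pd \<mu> f q = f' (dir \<mu>)"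
proof -
  have "((\<lambda>x. f (q + x *\<^sub>R dir \<mu>)) has_vector_derivative f' (dir \<mu>)) (at 0 within {s. q + s *\<^sub>R dir \<mu> \<in> Hs})"
    by (rule slice_deriv) (use f' in auto)
  then show ?thesis unfolding pd_def
    by (rule vector_derivative_within[OF at0_Sdir_nonbot[OF q]])
qed

lemma slice_pd:
  assumes d: "f differentiable (at (q' + x0 *\<^sub>R dir \<mu>) within Hs)" and q: "q' + x0 *\<^sub>R dir \<mu> \<in> Hs"
    and A: "\<And>x. x \<in> A \<Longrightarrow> q' + x *\<^sub>R dir \<mu> \<in> Hs"
  shows "((\<lambda>x. f (q' + x *\<^sub>R dir \<mu>)) has_vector_derivative pd \<mu> f (q' + x0 *\<^sub>R dir \<mu>)) (at x0 within A)"
proof -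
  obtain f' where f': "(f has_derivative f') (at (q' + x0 *\<^sub>R dir \<mu>) within Hs)"
    using d by (auto simp: differentiable_def)
  show ?thesis using slice_deriv[OF f' A] pd_eq[OF q f'] by simp
qed

definition eqH :: "(pt \<Rightarrow> 'b) \<Rightarrow> (pt \<Rightarrow> 'b) \<Rightarrow> bool" where
  "eqH f g \<longleftrightarrow> (\<forall>p\<in>Hs. f p = g p)"

lemma eqH_refl[simp]: "eqH f f" by (simp add: eqH_def)
lemma eqH_sym: "eqH f g \<Longrightarrow> eqH g f" by (simp add: eqH_def)
lemma eqH_trans: "eqH f g \<Longrightarrow> eqH g h \<Longrightarrow> eqH f h" by (simp add: eqH_def)
lemma eqHD: "eqH f g \<Longrightarrow> p \<in> Hs \<Longrightarrow> f p = g p" by (simp add: eqH_def)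

lemma pd_local:
  assumes q: "q \<in> Hs" and e: "eqH f g"
  shows "pd \<mu> f q = pd \<mu> g q"
proof -
  let ?S = "{s. q + s *\<^sub>R dir \<mu> \<in> Hs}"
  have 0: "(0::real) \<in> ?S" using q by simp
  have eq: "\<And>s. s \<in> ?S \<Longrightarrow> f (q + s *\<^sub>R dir \<mu>) = g (q + s *\<^sub>R dir \<mu>)"
    using e by (simp add: eqH_def)
  have "\<And>D. ((\<lambda>s. f (q + s *\<^sub>R dir \<mu>)) has_vector_derivative D) (at 0 within ?S) \<longleftrightarrow>
             ((\<lambda>s. g (q + s *\<^sub>R dir \<mu>)) has_vector_derivative D) (at 0 within ?S)"
    using has_vector_derivative_transform[OF 0, of "\<lambda>s. f (q + s *\<^sub>R dir \<mu>)" "\<lambda>s. g (q + s *\<^sub>R dir \<mu>)"]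
          has_vector_derivative_transform[OF 0, of "\<lambda>s. g (q + s *\<^sub>R dir \<mu>)" "\<lambda>s. f (q + s *\<^sub>R dir \<mu>)"] eq
    by metis
  then show ?thesis unfolding pd_def vector_derivative_def by simp
qed

lemma pd_local_eqH: "eqH f g \<Longrightarrow> eqH (pd \<mu> f) (pd \<mu> g)"
  using pd_local by (auto simp: eqH_def)

lemma diff_local:
  assumes "f differentiable (at q within Hs)" "q \<in> Hs" "eqH f g"
  shows "g differentiable (at q within Hs)"
proof -
  obtain f' where "(f has_derivative f') (at q within Hs)" using assms(1) by (auto simp: differentiable_def)
  from has_derivative_transform_within[OF this zero_less_one assms(2)] assms(3)
  have "(g has_derivative f') (at q within Hs)" by (auto simp: eqH_def)
  then show ?thesis by (auto simp: differentiable_def)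
qed

lemma diffon_local: "f differentiable_on Hs \<Longrightarrow> eqH f g \<Longrightarrow> g differentiable_on Hs"
  unfolding differentiable_on_def using diff_local by blast

lemma pd_linear:
  fixes L :: "'a::real_normed_vector \<Rightarrow> 'b::real_normed_vector" and f :: "pt \<Rightarrow> 'a"
  assumes L: "bounded_linear L" and q: "q \<in> Hs" and d: "f differentiable (at q within Hs)"
  shows "pd \<mu> (\<lambda>p. L (f p)) q = L (pd \<mu> f q)"
proof -
  obtain f' where f': "(f has_derivative f') (at q within Hs)" using d by (auto simp: differentiable_def)
  have "((\<lambda>p. L (f p)) has_derivative (\<lambda>x. L (f' x))) (at q within Hs)"
    using bounded_linear.has_derivative[OF L f'] .
  then show ?thesis using pd_eq[OF q f'] pd_eq[OF q] by simp
qed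

lemma pd_bilin:
  fixes f :: "pt \<Rightarrow> 'a::real_normed_vector" and g :: "pt \<Rightarrow> 'b::real_normed_vector"
    and prod :: "'a \<Rightarrow> 'b \<Rightarrow> 'c::real_normed_vector"
  assumes B: "bounded_bilinear prod" and q: "q \<in> Hs"
    and df: "f differentiable (at q within Hs)" and dg: "g differentiable (at q within Hs)"
  shows "pd \<mu> (\<lambda>p. prod (f p) (g p)) q = prod (pd \<mu> f q) (g q) + prod (f q) (pd \<mu> g q)"
proof -
  obtain f' where f': "(f has_derivative f') (at q within Hs)" using df by (auto simp: differentiable_def)
  obtain g' where g': "(g has_derivative g') (at q within Hs)" using dg by (auto simp: differentiable_def)
  have "((\<lambda>p. prod (f p) (g p)) has_derivative (\<lambda>h. prod (f q) (g' h) + prod (f' h) (g q))) (at q within Hs)"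
    using bounded_bilinear.FDERIV[OF B f' g'] .
  then have "pd \<mu> (\<lambda>p. prod (f p) (g p)) q = prod (f q) (g' (dir \<mu>)) + prod (f' (dir \<mu>)) (g q)"
    by (rule pd_eq[OF q])
  then show ?thesis using pd_eq[OF q f'] pd_eq[OF q g'] by (simp add: add.commute)
qed

lemma diff_linear:
  fixes L :: "'a::real_normed_vector \<Rightarrow> 'b::real_normed_vector" and f :: "pt \<Rightarrow> 'a"
  assumes L: "bounded_linear L" and f: "f differentiable (at q within S)"
  shows "(\<lambda>p. L (f p)) differentiable (at q within S)"
  using f bounded_linear.has_derivative[OF L] unfolding differentiable_def by blast

lemma diffon_linear:
  fixes L :: "'a::real_normed_vector \<Rightarrow> 'b::real_normed_vector" and f :: "pt \<Rightarrow> 'a"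
  assumes L: "bounded_linear L" and f: "f differentiable_on S"
  shows "(\<lambda>p. L (f p)) differentiable_on S"
  using f diff_linear[OF L] unfolding differentiable_on_def by blast

lemma diff_bilin:
  fixes f :: "pt \<Rightarrow> 'a::real_normed_vector" and g :: "pt \<Rightarrow> 'b::real_normed_vector"
    and prod :: "'a \<Rightarrow> 'b \<Rightarrow> 'c::real_normed_vector"
  assumes B: "bounded_bilinear prod" and f: "f differentiable (at q within S)" and g: "g differentiable (at q within S)"
  shows "(\<lambda>p. prod (f p) (g p)) differentiable (at q within S)"
  using f g bounded_bilinear.FDERIV[OF B] unfolding differentiable_def by blast

lemma diffon_bilin:
  fixes f :: "pt \<Rightarrow> 'a::real_normed_vector" and g :: "pt \<Rightarrow> 'b::real_normed_vector"
    and prod :: "'a \<Rightarrow> 'b \<Rightarrow> 'c::real_normed_vector"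
  assumes B: "bounded_bilinear prod" and f: "f differentiable_on S" and g: "g differentiable_on S"
  shows "(\<lambda>p. prod (f p) (g p)) differentiable_on S"
  using f g diff_bilin[OF B] unfolding differentiable_on_def by blast

lemma pd_add:
  assumes q: "q \<in> Hs" and df: "f differentiable (at q within Hs)" and dg: "g differentiable (at q within Hs)"
  shows "pd \<mu> (\<lambda>p. f p + g p) q = pd \<mu> f q + pd \<mu> g q"
proof -
  obtain f' where f': "(f has_derivative f') (at q within Hs)" using df by (auto simp: differentiable_def)
  obtain g' where g': "(g has_derivative g') (at q within Hs)" using dg by (auto simp: differentiable_def)
  have "((\<lambda>p. f p + g p) has_derivative (\<lambda>h. f' h + g' h)) (at q within Hs)"
    using has_derivative_add[OF f' g'] .
  then show ?thesis using pd_eq[OF q f'] pd_eq[OF q g'] pd_eq[OF q] by simp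
qed

lemma pd_const: "q \<in> Hs \<Longrightarrow> pd \<mu> (\<lambda>p. c) q = 0"
  using pd_eq[of q "\<lambda>p. c" "\<lambda>h. 0"] by simp

lemma pd_lin_fun:
  fixes L :: "pt \<Rightarrow> 'b::real_normed_vector"
  assumes L: "bounded_linear L" and q: "q \<in> Hs"
  shows "pd \<mu> L q = L (dir \<mu>)"
  using pd_eq[OF q bounded_linear.has_derivative[OF L has_derivative_ident]] by simp

lemma pds_append: "pds (ds @ [\<mu>]) f = pds ds (pd \<mu> f)"
  by (induction ds) auto

lemma pds_local: "eqH f g \<Longrightarrow> eqH (pds ds f) (pds ds g)"
  by (induction ds) (auto intro: pd_local_eqH)

lemma smooth_local: "smooth_H f \<Longrightarrow> eqH f g \<Longrightarrow> smooth_H g"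
  unfolding smooth_H_def using pds_local diffon_local by blast

lemma smooth_pd: "smooth_H f \<Longrightarrow> \<mu> < 3 \<Longrightarrow> smooth_H (pd \<mu> f)"
  unfolding smooth_H_def
proof safe
  fix ds :: "nat list" assume A: "\<forall>ds. set ds \<subseteq> {0, 1, 2} \<longrightarrow> pds ds f differentiable_on Hs"
    "\<mu> < 3" "set ds \<subseteq> {0, 1, 2}"
  then have "set (ds @ [\<mu>]) \<subseteq> {0,1,2}" by auto
  then show "pds ds (pd \<mu> f) differentiable_on Hs" using A(1) pds_append by metis
qed

lemma smooth_diff: "smooth_H f \<Longrightarrow> f differentiable_on Hs"
  unfolding smooth_H_def by (metis empty_subsetI list.set(1) pds.simps(1))

lemma smooth_diffat: "smooth_H f \<Longrightarrow> q \<in> Hs \<Longrightarrow> f differentiable (at q within Hs)"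
  using smooth_diff by (auto simp: differentiable_on_def)

lemma smooth_cont: "smooth_H f \<Longrightarrow> continuous_on Hs f"
  using smooth_diff differentiable_imp_continuous_on by blast

lemma smooth_pds_diff: "smooth_H f \<Longrightarrow> set ds \<subseteq> {0,1,2} \<Longrightarrow> q \<in> Hs \<Longrightarrow> pds ds f differentiable (at q within Hs)"
  unfolding smooth_H_def differentiable_on_def by blast

lemma pds_linear:
  fixes L :: "'a::real_normed_vector \<Rightarrow> 'b::real_normed_vector" and f :: "pt \<Rightarrow> 'a"
  assumes L: "bounded_linear L" and f: "smooth_H f" and ds: "set ds \<subseteq> {0,1,2}"
  shows "eqH (pds ds (\<lambda>p. L (f p))) (\<lambda>p. L (pds ds f p))"
  using ds
proof (induction ds)
  case Nil then show ?case by simp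
next
  case (Cons \<mu> ds)
  then have IH: "eqH (pds ds (\<lambda>p. L (f p))) (\<lambda>p. L (pds ds f p))" by simp
  show ?case unfolding eqH_def
  proof
    fix q assume q: "q \<in> Hs"
    have "pds (\<mu> # ds) (\<lambda>p. L (f p)) q = pd \<mu> (\<lambda>p. L (pds ds f p)) q"
      using pd_local[OF q IH] by simp
    also have "\<dots> = L (pds (\<mu> # ds) f q)"
      using pd_linear[OF L q smooth_pds_diff[OF f _ q]] Cons.prems by simp
    finally show "pds (\<mu> # ds) (\<lambda>p. L (f p)) q = L (pds (\<mu> # ds) f q)" .
  qed
qed

lemma smooth_linear:
  fixes L :: "'a::real_normed_vector \<Rightarrow> 'b::real_normed_vector" and f :: "pt \<Rightarrow> 'a"
  assumes L: "bounded_linear L" and f: "smooth_H f"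
  shows "smooth_H (\<lambda>p. L (f p))"
  unfolding smooth_H_def
proof safe
  fix ds :: "nat list" assume ds: "set ds \<subseteq> {0,1,2}"
  have "(\<lambda>p. L (pds ds f p)) differentiable_on Hs"
    using f ds diffon_linear[OF L] unfolding smooth_H_def by blast
  then show "pds ds (\<lambda>p. L (f p)) differentiable_on Hs"
    using diffon_local eqH_sym pds_linear[OF L f ds] by blast
qed

lemma pds_add:
  assumes "\<And>ds'. set ds' \<subseteq> {0,1,2} \<Longrightarrow> length ds' < length ds \<Longrightarrow>
             pds ds' f differentiable_on Hs \<and> pds ds' g differentiable_on Hs"
    and "set ds \<subseteq> {0,1,2}"
  shows "eqH (pds ds (\<lambda>p. f p + g p)) (\<lambda>p. pds ds f p + pds ds g p)"
  using assms
proof (induction ds)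
  case Nil then show ?case by simp
next
  case (Cons \<mu> ds)
  then have IH: "eqH (pds ds (\<lambda>p. f p + g p)) (\<lambda>p. pds ds f p + pds ds g p)" by force
  have dd: "pds ds f differentiable_on Hs" "pds ds g differentiable_on Hs" using Cons.prems by auto
  show ?case unfolding eqH_def
  proof
    fix q assume q: "q \<in> Hs"
    have "pds (\<mu> # ds) (\<lambda>p. f p + g p) q = pd \<mu> (\<lambda>p. pds ds f p + pds ds g p) q"
      using pd_local[OF q IH] by simp
    also have "\<dots> = pds (\<mu> # ds) f q + pds (\<mu> # ds) g q"
      using pd_add[OF q, of "pds ds f" "pds ds g" \<mu>] dd q by (simp add: differentiable_on_def)
    finally show "pds (\<mu> # ds) (\<lambda>p. f p + g p) q = pds (\<mu> # ds) f q + pds (\<mu> # ds) g q" .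
  qed
qed

lemma smooth_add:
  assumes f: "smooth_H f" and g: "smooth_H g"
  shows "smooth_H (\<lambda>p. f p + g p)"
  unfolding smooth_H_def
proof safe
  fix ds :: "nat list" assume ds: "set ds \<subseteq> {0,1,2}"
  have "(\<lambda>p. pds ds f p + pds ds g p) differentiable_on Hs"
    using f g ds unfolding smooth_H_def by (simp add: differentiable_on_add)
  moreover have "eqH (pds ds (\<lambda>p. f p + g p)) (\<lambda>p. pds ds f p + pds ds g p)"
    by (rule pds_add) (use f g ds in \<open>auto simp: smooth_H_def\<close>)
  ultimately show "pds ds (\<lambda>p. f p + g p) differentiable_on Hs"
    using diffon_local eqH_sym by blast
qed

lemma smooth_bilin:
  fixes prod :: "'a::real_normed_vector \<Rightarrow> 'b::real_normed_vector \<Rightarrow> 'c::real_normed_vector"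
  assumes B: "bounded_bilinear prod"
  shows "smooth_H f \<Longrightarrow> smooth_H g \<Longrightarrow> smooth_H (\<lambda>p. prod (f p) (g p))"
proof -
  have main: "\<And>(f::pt\<Rightarrow>'a) (g::pt\<Rightarrow>'b) ds. smooth_H f \<Longrightarrow> smooth_H g \<Longrightarrow> set ds \<subseteq> {0,1,2} \<Longrightarrow> length ds \<le> n \<Longrightarrow>
       pds ds (\<lambda>p. prod (f p) (g p)) differentiable_on Hs" for n
  proof (induction n)
    case 0
    then have "ds = []" by simp
    then show ?case using diffon_bilin[OF B smooth_diff[OF 0(1)] smooth_diff[OF 0(2)]] by simp
  next
    case (Suc n)
    show ?case
    proof (cases "length ds \<le> n")
      case True then show ?thesis using Suc.IH[OF Suc.prems(1-3)] by simp
    next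
      case False
      then have "ds \<noteq> []" by auto
      then obtain ds' \<mu> where ds: "ds = ds' @ [\<mu>]" by (cases ds rule: rev_cases) auto
      have ln: "length ds' \<le> n" using Suc.prems(4) ds by simp
      have mu: "\<mu> < 3" and ds': "set ds' \<subseteq> {0,1,2}" using Suc.prems(3) ds by auto
      let ?A = "\<lambda>p. prod (pd \<mu> f p) (g p)" and ?B = "\<lambda>p. prod (f p) (pd \<mu> g p)"
      have e1: "eqH (pd \<mu> (\<lambda>p. prod (f p) (g p))) (\<lambda>p. ?A p + ?B p)"
        unfolding eqH_def using pd_bilin[OF B _ smooth_diffat[OF Suc.prems(1)] smooth_diffat[OF Suc.prems(2)]] by simp
      have sf: "smooth_H (pd \<mu> f)" "smooth_H (pd \<mu> g)" using smooth_pd Suc.prems mu by auto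
      have dA: "\<And>d. set d \<subseteq> {0,1,2} \<Longrightarrow> length d \<le> n \<Longrightarrow> pds d ?A differentiable_on Hs"
        using Suc.IH[OF sf(1) Suc.prems(2)] by simp
      have dB: "\<And>d. set d \<subseteq> {0,1,2} \<Longrightarrow> length d \<le> n \<Longrightarrow> pds d ?B differentiable_on Hs"
        using Suc.IH[OF Suc.prems(1) sf(2)] by simp
      have e2: "eqH (pds ds' (\<lambda>p. ?A p + ?B p)) (\<lambda>p. pds ds' ?A p + pds ds' ?B p)"
        by (rule pds_add) (use dA dB ln ds' in auto)
      have "(\<lambda>p. pds ds' ?A p + pds ds' ?B p) differentiable_on Hs"
        using dA[OF ds' ln] dB[OF ds' ln] by (simp add: differentiable_on_add)
      then have "pds ds' (\<lambda>p. ?A p + ?B p) differentiable_on Hs"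
        using diffon_local eqH_sym e2 by blast
      then have "pds ds' (pd \<mu> (\<lambda>p. prod (f p) (g p))) differentiable_on Hs"
        using diffon_local eqH_sym pds_local[OF e1] by blast
      then show ?thesis using ds pds_append by metis
    qed
  qed
  assume fg: "smooth_H f" "smooth_H g"
  show ?thesis unfolding smooth_H_def
  proof safe
    fix ds :: "nat list" assume ds: "set ds \<subseteq> {0,1,2}"
    show "pds ds (\<lambda>p. prod (f p) (g p)) differentiable_on Hs" by (rule main[OF fg ds order_refl])
  qed
qed

lemma smooth_const: "smooth_H (\<lambda>p. c)"
proof -
  have "eqH (pds ds (\<lambda>p. c)) (\<lambda>p. if ds = [] then c else 0)" for ds
  proof (induction ds)
    case Nil then show ?case by simp
  next
    case (Cons a ds)
    show ?case unfolding eqH_def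
    proof
      fix q assume q: "q \<in> Hs"
      have "pds (a # ds) (\<lambda>p. c) q = pd a (\<lambda>p. if ds = [] then c else 0) q"
        using pd_local[OF q Cons] by simp
      also have "\<dots> = 0" by (cases "ds = []") (simp_all add: pd_const q)
      finally show "pds (a # ds) (\<lambda>p. c) q = (if a # ds = [] then c else 0)" by simp
    qed
  qed
  moreover have "(\<lambda>p. if ds = [] then c else 0) differentiable_on Hs" for ds
    by (cases "ds = []") simp_all
  ultimately have "pds ds (\<lambda>p. c) differentiable_on Hs" for ds
    using diffon_local eqH_sym by metis
  then show ?thesis unfolding smooth_H_def by blast
qed

lemma smooth_lin_fun:
  fixes L :: "pt \<Rightarrow> 'b::real_normed_vector"
  assumes L: "bounded_linear L" shows "smooth_H L"
  unfolding smooth_H_def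
proof safe
  fix ds :: "nat list" assume ds: "set ds \<subseteq> {0,1,2}"
  show "pds ds L differentiable_on Hs"
  proof (cases ds rule: rev_cases)
    case Nil then show ?thesis using L by (simp add: bounded_linear_imp_differentiable_on)
  next
    case (snoc ds' \<mu>)
    have "eqH (pd \<mu> L) (\<lambda>p. L (dir \<mu>))" unfolding eqH_def using pd_lin_fun[OF L] by blast
    then have "smooth_H (pd \<mu> L)" using smooth_local smooth_const eqH_sym by blast
    moreover have "set ds' \<subseteq> {0,1,2}" using snoc ds by simp
    ultimately have "pds ds' (pd \<mu> L) differentiable_on Hs" unfolding smooth_H_def by blast
    then show ?thesis using snoc by (simp add: pds_append)
  qed
qed




lemma Pxy_in_Hs:
  assumes p: "p \<in> Hs" and x: "x \<ge> 0" and y: "y \<ge> 0"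
  shows "p + x *\<^sub>R dir \<alpha> + y *\<^sub>R dir \<beta> \<in> Hs"
  using line_in_Hs[OF line_in_Hs[OF p x] y] .

lemma at01_nonbot: "at (0::real) within {0..1} \<noteq> bot"
  by (simp add: trivial_limit_within islimpt_Icc)

lemma pd_sym:
  fixes F :: "pt \<Rightarrow> 'b::banach"
  assumes F: "smooth_H F" and ab: "\<alpha> < 3" "\<beta> < 3" and p: "p \<in> Hs"
  shows "pd \<alpha> (pd \<beta> F) p = pd \<beta> (pd \<alpha> F) p"
proof -
  define P where "P = (\<lambda>x y. p + x *\<^sub>R dir \<alpha> + y *\<^sub>R dir \<beta>)"
  have P2: "P x y = (p + y *\<^sub>R dir \<beta>) + x *\<^sub>R dir \<alpha>" for x y unfolding P_def by (simp add: algebra_simps)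
  have PH: "x \<in> {0..1} \<Longrightarrow> y \<in> {0..1} \<Longrightarrow> P x y \<in> Hs" for x y unfolding P_def using Pxy_in_Hs[OF p] by simp
  have sB: "smooth_H (pd \<beta> F)" and sA: "smooth_H (pd \<alpha> F)" using smooth_pd F ab by auto
  have sC: "smooth_H (pd \<alpha> (pd \<beta> F))" and sD: "smooth_H (pd \<beta> (pd \<alpha> F))" using smooth_pd sA sB ab by auto
  define g where "g = (\<lambda>x y. F (P x y))"
  define A where "A = (\<lambda>x y. pd \<alpha> F (P x y))"
  define B where "B = (\<lambda>x y. pd \<beta> F (P x y))"
  define C where "C = (\<lambda>x y. pd \<alpha> (pd \<beta> F) (P x y))"
  define D where "D = (\<lambda>x y. pd \<beta> (pd \<alpha> F) (P x y))"
  have dy: "\<And>G::pt\<Rightarrow>'b. smooth_H G \<Longrightarrow> x \<in> {0..1} \<Longrightarrow> y \<in> {0..1} \<Longrightarrow>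
     ((\<lambda>y. G (P x y)) has_vector_derivative pd \<beta> G (P x y)) (at y within {0..1})" for x y
  proof -
    fix G :: "pt \<Rightarrow> 'b" assume G: "smooth_H G" and xy: "x \<in> {0..1}" "y \<in> {0..1}"
    show "((\<lambda>y. G (P x y)) has_vector_derivative pd \<beta> G (P x y)) (at y within {0..1})"
      unfolding P_def
      by (rule slice_pd) (use smooth_diffat[OF G] PH xy in \<open>auto simp: P_def\<close>)
  qed
  have dx: "\<And>G::pt\<Rightarrow>'b. smooth_H G \<Longrightarrow> x \<in> {0..1} \<Longrightarrow> y \<in> {0..1} \<Longrightarrow>
     ((\<lambda>x. G (P x y)) has_vector_derivative pd \<alpha> G (P x y)) (at x within {0..1})" for x y
  proof -
    fix G :: "pt \<Rightarrow> 'b" assume G: "smooth_H G" and xy: "x \<in> {0..1}" "y \<in> {0..1}"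
    show "((\<lambda>x. G (P x y)) has_vector_derivative pd \<alpha> G (P x y)) (at x within {0..1})"
      unfolding P2
      by (rule slice_pd) (use smooth_diffat[OF G] PH xy P2 in \<open>auto\<close>)
  qed
  have contP: "continuous_on ({0..1} \<times> {0..1}) (\<lambda>z. P (fst z) (snd z))"
    unfolding P_def by (intro continuous_intros)
  have contG: "smooth_H G \<Longrightarrow> continuous_on ({0..1} \<times> {0..1}) (\<lambda>z. G (P (fst z) (snd z)))" for G :: "pt \<Rightarrow> 'b"
    by (rule continuous_on_compose2[OF smooth_cont contP]) (use PH in auto)
  have contC: "continuous_on ({0..1} \<times> {0..1}) (\<lambda>(x,y). C x y)"
    using contG[OF sC] by (simp add: C_def case_prod_beta)
  have contD: "continuous_on ({0..1} \<times> {0..1}) (\<lambda>(x,y). D x y)"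
    using contG[OF sD] by (simp add: D_def case_prod_beta)
  have contB: "continuous_on ({0..1} \<times> {0..1}) (\<lambda>(x,y). B x y)"
    using contG[OF sB] by (simp add: B_def case_prod_beta)
  have cont1: "continuous_on ({0..1} \<times> {0..1}) (\<lambda>(x,y). H x y) \<Longrightarrow> x \<in> {0..1} \<Longrightarrow> continuous_on {0..1} (H x)"
    for H :: "real \<Rightarrow> real \<Rightarrow> 'b" and x
    by (rule continuous_on_compose2[where f="\<lambda>y. (x,y)" and g="\<lambda>(x,y). H x y", simplified])
       (auto intro!: continuous_intros)
  have key: "integral {0..y1} (C 0) = integral {0..y1} (D 0)" if y1: "y1 \<in> {0..1}" for y1
  proof -
    have sub: "{0..y1} \<subseteq> {0..1}" using y1 by auto
    have ftcB: "integral {0..y1} (B x) = g x y1 - g x 0" if x: "x \<in> {0..1}" for x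
    proof -
      have "(B x has_integral (g x y1 - g x 0)) {0..y1}"
        by (rule fundamental_theorem_of_calculus)
           (use y1 in simp, use has_vector_derivative_within_subset[OF dy[OF F x] sub] sub in \<open>auto simp: g_def B_def\<close>)
      then show ?thesis by (rule integral_unique)
    qed
    have ftcD: "integral {0..y1} (D x) = A x y1 - A x 0" if x: "x \<in> {0..1}" for x
    proof -
      have "(D x has_integral (A x y1 - A x 0)) {0..y1}"
        by (rule fundamental_theorem_of_calculus)
           (use y1 in simp, use has_vector_derivative_within_subset[OF dy[OF sA x] sub] sub in \<open>auto simp: A_def D_def\<close>)
      then show ?thesis by (rule integral_unique)
    qed
    have L: "((\<lambda>x. integral (cbox 0 y1) (B x)) has_vector_derivative integral (cbox 0 y1) (C 0)) (at 0 within {0..1})"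
    proof (rule leibniz_rule_vector_derivative[where f=B and fx=C])
      fix x t assume x: "x \<in> {0..1::real}" and t: "t \<in> cbox 0 y1"
      then have t': "t \<in> {0..1}" using sub by auto
      show "((\<lambda>x. B x t) has_vector_derivative C x t) (at x within {0..1})"
        using dx[OF sB x t'] by (simp add: B_def C_def)
    next
      fix x assume x: "x \<in> {0..1::real}"
      have "continuous_on {0..1} (B x)" by (rule cont1[OF contB x])
      then have "continuous_on {0..y1} (B x)" using continuous_on_subset sub by blast
      then show "B x integrable_on cbox 0 y1" by (simp add: integrable_continuous_interval)
    next
      show "continuous_on ({0..1} \<times> cbox 0 y1) (\<lambda>(x, t). C x t)"
        by (rule continuous_on_subset[OF contC]) (use sub in auto)
    qed auto
    have L2: "((\<lambda>x. integral (cbox 0 y1) (B x)) has_vector_derivative A 0 y1 - A 0 0) (at 0 within {0..1})"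
    proof (rule has_vector_derivative_transform[where f="\<lambda>x. g x y1 - g x 0"])
      show "((\<lambda>x. g x y1 - g x 0) has_vector_derivative A 0 y1 - A 0 0) (at 0 within {0..1})"
        using dx[OF F, of 0 y1] dx[OF F, of 0 0] y1
        by (auto simp: g_def A_def intro!: has_vector_derivative_diff)
    qed (use ftcB in auto)
    have "integral (cbox 0 y1) (C 0) = A 0 y1 - A 0 0"
      using vector_derivative_within[OF at01_nonbot L]
            vector_derivative_within[OF at01_nonbot L2] by (simp add: cbox_interval)
    then show ?thesis using ftcD[of 0] by simp
  qed
  have cC: "continuous_on {0..1} (C 0)" by (rule cont1[OF contC]) simp
  have cD: "continuous_on {0..1} (D 0)" by (rule cont1[OF contD]) simp
  have i1: "((\<lambda>u. integral {0..u} (C 0)) has_vector_derivative C 0 0) (at 0 within {0..1})"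
    using integral_has_vector_derivative[OF cC] by simp
  have i2: "((\<lambda>u. integral {0..u} (C 0)) has_vector_derivative D 0 0) (at 0 within {0..1})"
  proof (rule has_vector_derivative_transform[where f="\<lambda>u. integral {0..u} (D 0)"])
    show "(0::real) \<in> {0..1}" by simp
    show "\<And>u. u \<in> {0..1} \<Longrightarrow> integral {0..u} (C 0) = integral {0..u} (D 0)" using key by blast
    show "((\<lambda>u. integral {0..u} (D 0)) has_vector_derivative D 0 0) (at 0 within {0..1})"
      using integral_has_vector_derivative[OF cD, of 0] by simp
  qed
  have "C 0 0 = D 0 0"
    using vector_derivative_within[OF at01_nonbot i1]
          vector_derivative_within[OF at01_nonbot i2] by simp
  then show ?thesis by (simp add: C_def D_def P_def)
qed




lemma sum3: "(\<Sum>\<mu><3. f \<mu>) = f 0 + f 1 + f (2::nat)"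
  by (simp add: eval_nat_numeral)

lemma gam0_mv: "gam 0 *v x = vector [x$1, -(x$2)]"
  by (simp add: vec_eq_iff forall_2 matrix_vector_mult_def sum_2 gam_def)
lemma gam1_mv: "gam (Suc 0) *v x = vector [x$2, -(x$1)]"
  by (simp add: vec_eq_iff forall_2 matrix_vector_mult_def sum_2 gam_def)
lemma gam2_mv: "gam 2 *v x = vector [-\<i> * x$2, -\<i> * x$1]"
  by (simp add: vec_eq_iff forall_2 matrix_vector_mult_def sum_2 gam_def)

lemmas gam_mv = gam0_mv gam1_mv gam2_mv

lemma scaleR_cplx: "r *\<^sub>R (z::complex) = complex_of_real r * z"
  by (rule scaleR_conv_of_real)

lemma scaleR_comp: "(r *\<^sub>R x) $ i = complex_of_real r * (x $ i :: complex)"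
  by (subst vector_scaleR_component) (rule scaleR_conv_of_real)

lemma mm_mv: "(A ** B) *v x = A *v (B *v x)"
  by (simp add: matrix_vector_mul_assoc)

lemma bl_mv: "bounded_linear (\<lambda>x::complex^2. M *v x)"
  by simp

lemma bl_smult: "bounded_linear (\<lambda>x::complex^2. c *s x)"
proof -
  have "linear (\<lambda>x::complex^2. c *s x)"
    by (rule linearI) (auto simp: vec_eq_iff scaleR_comp algebra_simps simp del: vector_scaleR_component)
  then show ?thesis by (simp add: linear_conv_bounded_linear)
qed

lemma hdot_bilinear: "bounded_bilinear hdot"
proof -
  have "bilinear hdot"
    unfolding bilinear_def
    by (auto intro!: linearI simp: hdot_def sum_2 scaleR_comp scaleR_cplx algebra_simps simp del: vector_scaleR_component)
  then show ?thesis by (simp add: bilinear_conv_bounded_bilinear)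
qed

lemma hdot_expand: "hdot u w = cnj (u$1) * w$1 + cnj (u$2) * w$2"
  by (simp add: hdot_def sum_2)

lemma pd_sum_lin:
  fixes g :: "'k \<Rightarrow> pt \<Rightarrow> 'a::real_normed_vector" and L :: "'k \<Rightarrow> 'a \<Rightarrow> 'b::real_normed_vector"
  assumes K: "finite K" and q: "q \<in> Hs"
    and d: "\<And>k. k \<in> K \<Longrightarrow> g k differentiable (at q within Hs)"
    and L: "\<And>k. k \<in> K \<Longrightarrow> bounded_linear (L k)"
  shows "pd \<mu> (\<lambda>p. \<Sum>k\<in>K. L k (g k p)) q = (\<Sum>k\<in>K. L k (pd \<mu> (g k) q))"
proof -
  have "\<forall>k\<in>K. \<exists>D. (g k has_derivative D) (at q within Hs)" using d by (auto simp: differentiable_def)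
  then obtain D where D: "\<And>k. k \<in> K \<Longrightarrow> (g k has_derivative D k) (at q within Hs)" by metis
  have "((\<lambda>p. \<Sum>k\<in>K. L k (g k p)) has_derivative (\<lambda>h. \<Sum>k\<in>K. L k (D k h))) (at q within Hs)"
    by (rule has_derivative_sum) (use D L bounded_linear.has_derivative in blast)
  then show ?thesis using pd_eq[OF q] pd_eq[OF q D] by simp
qed

lemma smooth_sum:
  fixes g :: "'k \<Rightarrow> pt \<Rightarrow> 'a::real_normed_vector"
  assumes K: "finite K" and s: "\<And>k. k \<in> K \<Longrightarrow> smooth_H (g k)"
  shows "smooth_H (\<lambda>p. \<Sum>k\<in>K. g k p)"
  using K s
proof (induction K rule: finite_induct)
  case empty then show ?case using smooth_const[of 0] by simp
next
  case (insert x F)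
  then show ?case using smooth_add[of "g x" "\<lambda>p. \<Sum>k\<in>F. g k p"] by simp
qed

lemma smooth_dirac: "smooth_H f \<Longrightarrow> smooth_H (dirac f)"
  unfolding dirac_def
  by (rule smooth_sum) (auto intro!: smooth_linear[OF bl_mv] smooth_pd)

lemma pd_dirac:
  assumes f: "smooth_H f" and q: "q \<in> Hs"
  shows "pd \<mu> (dirac f) q = (\<Sum>\<nu><3. gam \<nu> *v pd \<mu> (pd \<nu> f) q)"
  unfolding dirac_def
  by (rule pd_sum_lin[OF _ q]) (auto intro!: smooth_diffat[OF _ q] smooth_pd[OF f])

lemma Box_expand: "Box f p = - pd 0 (pd 0 f) p + pd 1 (pd 1 f) p + pd 2 (pd 2 f) p"
  by (simp add: Box_def sum3 eta_def)

lemma dirac_expand: "dirac f p = gam 0 *v pd 0 f p + gam 1 *v pd 1 f p + gam 2 *v pd 2 f p"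
  by (simp add: dirac_def sum3)

lemma dirac_dirac:
  assumes f: "smooth_H f" and q: "q \<in> Hs"
  shows "dirac (dirac f) q = - Box f q"
proof -
  have s: "pd \<mu> (pd \<nu> f) q = pd \<nu> (pd \<mu> f) q" if "\<mu> < 3" "\<nu> < 3" for \<mu> \<nu>
    using pd_sym[OF f that q] .
  show ?thesis
    unfolding dirac_expand[of "dirac f"] pd_dirac[OF f q] Box_expand sum3
    using s[of 0 1] s[of 0 2] s[of 1 2]
    by (simp add: gam_mv vec_eq_iff forall_2 algebra_simps)
qed




lemma pd_diff:
  assumes q: "q \<in> Hs" and df: "f differentiable (at q within Hs)" and dg: "g differentiable (at q within Hs)"
  shows "pd \<mu> (\<lambda>p. f p - g p) q = pd \<mu> f q - pd \<mu> g q"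
proof -
  obtain f' where f': "(f has_derivative f') (at q within Hs)" using df by (auto simp: differentiable_def)
  obtain g' where g': "(g has_derivative g') (at q within Hs)" using dg by (auto simp: differentiable_def)
  have "((\<lambda>p. f p - g p) has_derivative (\<lambda>h. f' h - g' h)) (at q within Hs)"
    using has_derivative_diff[OF f' g'] .
  then show ?thesis using pd_eq[OF q f'] pd_eq[OF q g'] pd_eq[OF q] by simp
qed

lemma smooth_diff_fun:
  fixes f g :: "pt \<Rightarrow> 'a::real_normed_vector"
  assumes f: "smooth_H f" and g: "smooth_H g" shows "smooth_H (\<lambda>p. f p - g p)"
proof -
  have L: "bounded_linear (\<lambda>x::'a. - x)" using bounded_linear_minus[OF bounded_linear_ident] by simp
  have "smooth_H (\<lambda>p. f p + - g p)" by (rule smooth_add[OF f smooth_linear[OF L g]])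
  then show ?thesis by simp
qed

lemma pd2_bilin:
  fixes f :: "pt \<Rightarrow> 'a::real_normed_vector" and g :: "pt \<Rightarrow> 'b::real_normed_vector"
    and prod :: "'a \<Rightarrow> 'b \<Rightarrow> 'c::real_normed_vector"
  assumes B: "bounded_bilinear prod" and f: "smooth_H f" and g: "smooth_H g" and q: "q \<in> Hs" and a: "\<alpha> < 3"
  shows "pd \<alpha> (pd \<alpha> (\<lambda>p. prod (f p) (g p))) q =
    prod (pd \<alpha> (pd \<alpha> f) q) (g q) + 2 *\<^sub>R prod (pd \<alpha> f q) (pd \<alpha> g q) + prod (f q) (pd \<alpha> (pd \<alpha> g) q)"
proof -
  have e: "eqH (pd \<alpha> (\<lambda>p. prod (f p) (g p))) (\<lambda>p. prod (pd \<alpha> f p) (g p) + prod (f p) (pd \<alpha> g p))"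
    unfolding eqH_def using pd_bilin[OF B _ smooth_diffat[OF f] smooth_diffat[OF g]] by simp
  have sf: "smooth_H (pd \<alpha> f)" "smooth_H (pd \<alpha> g)" using smooth_pd f g a by auto
  have "pd \<alpha> (pd \<alpha> (\<lambda>p. prod (f p) (g p))) q = pd \<alpha> (\<lambda>p. prod (pd \<alpha> f p) (g p) + prod (f p) (pd \<alpha> g p)) q"
    by (rule pd_local[OF q e])
  also have "\<dots> = pd \<alpha> (\<lambda>p. prod (pd \<alpha> f p) (g p)) q + pd \<alpha> (\<lambda>p. prod (f p) (pd \<alpha> g p)) q"
    by (rule pd_add[OF q diff_bilin[OF B smooth_diffat[OF sf(1) q] smooth_diffat[OF g q]]
                          diff_bilin[OF B smooth_diffat[OF f q] smooth_diffat[OF sf(2) q]]])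
  also have "\<dots> = prod (pd \<alpha> (pd \<alpha> f) q) (g q) + prod (pd \<alpha> f q) (pd \<alpha> g q)
       + (prod (pd \<alpha> f q) (pd \<alpha> g q) + prod (f q) (pd \<alpha> (pd \<alpha> g) q))"
    using pd_bilin[OF B q smooth_diffat[OF sf(1) q] smooth_diffat[OF g q]]
          pd_bilin[OF B q smooth_diffat[OF f q] smooth_diffat[OF sf(2) q]] by simp
  finally show ?thesis by (simp add: scaleR_2 algebra_simps)
qed

lemma Box_bilin:
  fixes f :: "pt \<Rightarrow> 'a::real_normed_vector" and g :: "pt \<Rightarrow> 'b::real_normed_vector"
    and prod :: "'a \<Rightarrow> 'b \<Rightarrow> 'c::real_normed_vector"
  assumes B: "bounded_bilinear prod" and f: "smooth_H f" and g: "smooth_H g" and q: "q \<in> Hs"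
  shows "Box (\<lambda>p. prod (f p) (g p)) q = prod (Box f q) (g q)
     + 2 *\<^sub>R (- prod (pd 0 f q) (pd 0 g q) + prod (pd 1 f q) (pd 1 g q) + prod (pd 2 f q) (pd 2 g q))
     + prod (f q) (Box g q)"
  unfolding Box_expand
  using pd2_bilin[OF B f g q, of 0] pd2_bilin[OF B f g q, of 1] pd2_bilin[OF B f g q, of 2]
  by (simp add: bounded_bilinear.add_left[OF B] bounded_bilinear.add_right[OF B]
      bounded_bilinear.minus_left[OF B] bounded_bilinear.minus_right[OF B]
      bounded_bilinear.diff_left[OF B] bounded_bilinear.diff_right[OF B] algebra_simps)

lemma pd2_linear:
  fixes L :: "'a::real_normed_vector \<Rightarrow> 'b::real_normed_vector" and f :: "pt \<Rightarrow> 'a"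
  assumes L: "bounded_linear L" and f: "smooth_H f" and q: "q \<in> Hs" and a: "\<alpha> < 3"
  shows "pd \<beta> (pd \<alpha> (\<lambda>p. L (f p))) q = L (pd \<beta> (pd \<alpha> f) q)"
proof -
  have e: "eqH (pd \<alpha> (\<lambda>p. L (f p))) (\<lambda>p. L (pd \<alpha> f p))"
    unfolding eqH_def using pd_linear[OF L _ smooth_diffat[OF f]] by simp
  show ?thesis using pd_local[OF q e] pd_linear[OF L q smooth_diffat[OF smooth_pd[OF f a] q]] by simp
qed

lemma Box_linear:
  fixes L :: "'a::real_normed_vector \<Rightarrow> 'b::real_normed_vector" and f :: "pt \<Rightarrow> 'a"
  assumes L: "bounded_linear L" and f: "smooth_H f" and q: "q \<in> Hs"
  shows "Box (\<lambda>p. L (f p)) q = L (Box f q)"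
  unfolding Box_expand using pd2_linear[OF L f q]
  by (simp add: linear_simps[OF L])

lemma Box_diff:
  assumes f: "smooth_H f" and g: "smooth_H g" and q: "q \<in> Hs"
  shows "Box (\<lambda>p. f p - g p) q = Box f q - Box g q"
proof -
  have "pd \<alpha> (pd \<alpha> (\<lambda>p. f p - g p)) q = pd \<alpha> (pd \<alpha> f) q - pd \<alpha> (pd \<alpha> g) q" if a: "\<alpha> < 3" for \<alpha>
  proof -
    have e: "eqH (pd \<alpha> (\<lambda>p. f p - g p)) (\<lambda>p. pd \<alpha> f p - pd \<alpha> g p)"
      unfolding eqH_def using pd_diff[OF _ smooth_diffat[OF f] smooth_diffat[OF g]] by simp
    show ?thesis using pd_local[OF q e] pd_diff[OF q smooth_diffat[OF smooth_pd[OF f a] q] smooth_diffat[OF smooth_pd[OF g a] q]]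
      by simp
  qed
  then show ?thesis unfolding Box_expand by (simp add: algebra_simps)
qed

lemma smult_neg_i: "- (\<i> *s X) = (Y::complex^2) \<Longrightarrow> X = \<i> *s Y"
proof -
  assume "- (\<i> *s X) = Y"
  then have "Y = - (\<i> *s X)" by simp
  then show ?thesis by (simp add: vec_eq_iff)
qed

lemma dirac_lin:
  assumes f: "smooth_H f" and g: "smooth_H g" and q: "q \<in> Hs"
  shows "dirac (\<lambda>p. f p + c *s g p) q = dirac f q + c *s dirac g q"
proof -
  have "pd \<mu> (\<lambda>p. f p + c *s g p) q = pd \<mu> f q + c *s pd \<mu> g q" for \<mu>
    using pd_add[OF q smooth_diffat[OF f q] diff_linear[OF bl_smult smooth_diffat[OF g q]]]
          pd_linear[OF bl_smult q smooth_diffat[OF g q]] by simp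
  then show ?thesis unfolding dirac_expand
    by (simp add: vec_eq_iff forall_2 gam_mv algebra_simps)
qed




lemma smooth_smul: "smooth_H v \<Longrightarrow> smooth_H \<psi> \<Longrightarrow> smooth_H (smul v \<psi>)"
  unfolding smul_def by (rule smooth_bilin[OF bounded_bilinear_scaleR])

lemma Box_smul:
  assumes v: "smooth_H v" and \<psi>: "smooth_H \<psi>" and q: "q \<in> Hs"
  shows "Box (smul v \<psi>) q = Box v q *\<^sub>R \<psi> q
     + 2 *\<^sub>R (- (pd 0 v q *\<^sub>R pd 0 \<psi> q) + pd 1 v q *\<^sub>R pd 1 \<psi> q + pd 2 v q *\<^sub>R pd 2 \<psi> q)
     + v q *\<^sub>R Box \<psi> q"
  unfolding smul_def by (rule Box_bilin[OF bounded_bilinear_scaleR v \<psi> q])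

lemma Box_psi:
  assumes v: "smooth_H v" and \<psi>: "smooth_H \<psi>" and q: "q \<in> Hs"
    and dirac_eq: "\<And>p. p \<in> Hs \<Longrightarrow> - (\<i> *s dirac \<psi> p) = v p *\<^sub>R \<psi> p"
  shows "Box \<psi> q = - (\<i> *s dirac (smul v \<psi>) q)"
proof -
  have e: "eqH (dirac \<psi>) (\<lambda>p. \<i> *s smul v \<psi> p)"
    unfolding eqH_def smul_def using dirac_eq smult_neg_i by blast
  have sw: "smooth_H (smul v \<psi>)" using smooth_smul[OF v \<psi>] .
  have "pd \<mu> (dirac \<psi>) q = \<i> *s pd \<mu> (smul v \<psi>) q" for \<mu>
    using pd_local[OF q e] pd_linear[OF bl_smult q smooth_diffat[OF sw q]] by simp
  then have "dirac (dirac \<psi>) q = \<i> *s dirac (smul v \<psi>) q"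
    unfolding dirac_expand by (simp add: vec_eq_iff forall_2 gam_mv algebra_simps)
  then have "- Box \<psi> q = \<i> *s dirac (smul v \<psi>) q" using dirac_dirac[OF \<psi> q] by simp
  then show ?thesis by (metis minus_minus)
qed

lemma part_i_core:
  assumes v: "smooth_H v" and \<psi>: "smooth_H \<psi>" and q: "q \<in> Hs"
    and dirac_eq: "\<And>p. p \<in> Hs \<Longrightarrow> - (\<i> *s dirac \<psi> p) = v p *\<^sub>R \<psi> p"
    and kg_eq: "complex_of_real (- Box v q + v q) = hdot (\<psi> q) (gam 0 *v \<psi> q)"
  shows "v q *\<^sub>R \<psi> q - Box (smul v \<psi>) q = N1 \<psi> v q + N2 \<psi> q + 2 *\<^sub>R Q0 \<psi> v q"
proof -
  have B: "Box \<psi> q = - (\<i> *s dirac (smul v \<psi>) q)" by (rule Box_psi[OF v \<psi> q dirac_eq])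
  have N2: "N2 \<psi> q = (- Box v q + v q) *\<^sub>R \<psi> q"
    unfolding N2_def kg_eq[symmetric] by (simp add: vec_eq_iff scaleR_comp algebra_simps del: vector_scaleR_component)
  show ?thesis
    unfolding Box_smul[OF v \<psi> q] B N2 N1_def Q0_def
    by (simp add: vec_eq_iff scaleR_comp algebra_simps del: vector_scaleR_component)
qed

lemma part_i:
  assumes v: "smooth_H v" and \<psi>: "smooth_H \<psi>" and q: "q \<in> Hs"
    and dirac_eq: "\<And>p. p \<in> Hs \<Longrightarrow> - (\<i> *s dirac \<psi> p) = v p *\<^sub>R \<psi> p"
    and kg_eq: "complex_of_real (- Box v q + v q) = hdot (\<psi> q) (gam 0 *v \<psi> q)"
  shows "- (\<i> *s dirac (\<lambda>p. \<psi> p + \<i> *s dirac (smul v \<psi>) p) q) = N1 \<psi> v q + N2 \<psi> q + 2 *\<^sub>R Q0 \<psi> v q"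
proof -
  have sw: "smooth_H (dirac (smul v \<psi>))" using smooth_dirac[OF smooth_smul[OF v \<psi>]] .
  have "- (\<i> *s dirac (\<lambda>p. \<psi> p + \<i> *s dirac (smul v \<psi>) p) q)
        = - (\<i> *s dirac \<psi> q) + dirac (dirac (smul v \<psi>)) q"
    unfolding dirac_lin[OF \<psi> sw q] by (simp add: vec_eq_iff)
  also have "\<dots> = v q *\<^sub>R \<psi> q - Box (smul v \<psi>) q"
    using dirac_eq[OF q] dirac_dirac[OF smooth_smul[OF v \<psi>] q] by simp
  finally show ?thesis using part_i_core[OF v \<psi> q dirac_eq kg_eq] by simp
qed

lemma part_ii:
  assumes v: "smooth_H v" and \<psi>: "smooth_H \<psi>" and \<Psi>: "smooth_H \<Psi>" and q: "q \<in> Hs"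
    and dirac_eq: "\<And>p. p \<in> Hs \<Longrightarrow> - (\<i> *s dirac \<psi> p) = v p *\<^sub>R \<psi> p"
    and kg_eq: "complex_of_real (- Box v q + v q) = hdot (\<psi> q) (gam 0 *v \<psi> q)"
    and wave_eq: "- Box \<Psi> q = \<i> *s dirac \<psi> q"
  shows "- Box (\<lambda>p. \<Psi> p - v p *\<^sub>R \<psi> p) q = - N1 \<psi> v q - N2 \<psi> q - 2 *\<^sub>R Q0 \<psi> v q"
proof -
  have "Box (\<lambda>p. \<Psi> p - v p *\<^sub>R \<psi> p) q = Box \<Psi> q - Box (smul v \<psi>) q"
    using Box_diff[OF \<Psi> smooth_smul[OF v \<psi>] q] by (simp add: smul_def)
  moreover have "\<i> *s dirac \<psi> q = - (v q *\<^sub>R \<psi> q)"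
    using dirac_eq[OF q] by (metis minus_minus)
  ultimately have "- Box (\<lambda>p. \<Psi> p - v p *\<^sub>R \<psi> p) q = - (v q *\<^sub>R \<psi> q - Box (smul v \<psi>) q)"
    using wave_eq by (simp add: algebra_simps)
  then show ?thesis using part_i_core[OF v \<psi> q dirac_eq kg_eq] by (simp add: algebra_simps)
qed




lemma part_iii:
  assumes v: "smooth_H v" and \<psi>: "smooth_H \<psi>" and q: "q \<in> Hs"
    and dirac_eq: "\<And>p. p \<in> Hs \<Longrightarrow> - (\<i> *s dirac \<psi> p) = v p *\<^sub>R \<psi> p"
    and kg_eq: "complex_of_real (- Box v q + v q) = hdot (\<psi> q) (gam 0 *v \<psi> q)"
  shows "(let vt = (\<lambda>q. complex_of_real (v q) - hdot (\<psi> q) (gam 0 *v \<psi> q))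
        in - Box vt q + vt q = N3 \<psi> v q + N4 \<psi> q)"
proof -
  define h where "h = (\<lambda>q. hdot (\<psi> q) (gam 0 *v \<psi> q))"
  have sg: "smooth_H (\<lambda>q. gam 0 *v \<psi> q)" by (rule smooth_linear[OF bl_mv \<psi>])
  have sh: "smooth_H h" unfolding h_def by (rule smooth_bilin[OF hdot_bilinear \<psi> sg])
  have sv: "smooth_H (\<lambda>q. complex_of_real (v q))" by (rule smooth_linear[OF bounded_linear_of_real v])
  have Bvt: "Box (\<lambda>q. complex_of_real (v q) - h q) q = complex_of_real (Box v q) - Box h q"
    using Box_diff[OF sv sh q] Box_linear[OF bounded_linear_of_real v q] by simp
  have pg: "pd \<alpha> (\<lambda>q. gam 0 *v \<psi> q) q = gam 0 *v pd \<alpha> \<psi> q" for \<alpha>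
    by (rule pd_linear[OF bl_mv q smooth_diffat[OF \<psi> q]])
  have Bg: "Box (\<lambda>q. gam 0 *v \<psi> q) q = gam 0 *v Box \<psi> q" by (rule Box_linear[OF bl_mv \<psi> q])
  have Bh: "Box h q = hdot (Box \<psi> q) (gam 0 *v \<psi> q)
     + 2 *\<^sub>R (- hdot (pd 0 \<psi> q) (gam 0 *v pd 0 \<psi> q) + hdot (pd 1 \<psi> q) (gam 0 *v pd 1 \<psi> q)
              + hdot (pd 2 \<psi> q) (gam 0 *v pd 2 \<psi> q))
     + hdot (\<psi> q) (gam 0 *v Box \<psi> q)"
    unfolding h_def using Box_bilin[OF hdot_bilinear \<psi> sg q] by (simp add: pg Bg)
  have Bp: "Box \<psi> q = - (\<i> *s dirac (smul v \<psi>) q)" by (rule Box_psi[OF v \<psi> q dirac_eq])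
  have main: "Box h q = N3 \<psi> v q + N4 \<psi> q"
    unfolding Bh Bp dirac_expand N3_def N4_def sum3
    by (simp add: eta_def hdot_expand gam_mv mm_mv scaleR_cplx algebra_simps)
  have vt_eq: "(\<lambda>q. complex_of_real (v q) - hdot (\<psi> q) (gam 0 *v \<psi> q)) = (\<lambda>q. complex_of_real (v q) - h q)"
    by (simp add: h_def)
  have hq: "h q = complex_of_real (- Box v q + v q)" using kg_eq by (simp add: h_def)
  show ?thesis
    unfolding Let_def vt_eq Bvt main[symmetric] hq by simp
qed




lemma bl_coord: "bounded_linear (coord a)"
proof -
  have "coord a = (if a = 0 then fst else if a = 1 then (\<lambda>p. fst (snd p)) else (\<lambda>p. snd (snd p)))"
    by (auto simp: coord_def fun_eq_iff)
  moreover have "bounded_linear (\<lambda>p::pt. fst (snd p))" "bounded_linear (\<lambda>p::pt. snd (snd p))"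
    using bounded_linear_compose[OF bounded_linear_fst bounded_linear_snd]
          bounded_linear_compose[OF bounded_linear_snd bounded_linear_snd] by (simp_all add: o_def)
  moreover have "bounded_linear (fst :: pt \<Rightarrow> real)" by (rule bounded_linear_fst)
  ultimately show ?thesis by simp
qed

lemma smooth_coord: "smooth_H (coord a)"
  by (rule smooth_lin_fun[OF bl_coord])

lemma pd_coord: "q \<in> Hs \<Longrightarrow> pd \<mu> (coord a) q = coord a (dir \<mu>)"
  by (rule pd_lin_fun[OF bl_coord])

definition Gform :: "nat \<Rightarrow> nat \<Rightarrow> real \<Rightarrow> nat \<Rightarrow> nat \<Rightarrow> cmat \<Rightarrow> (pt \<Rightarrow> spinor) \<Rightarrow> pt \<Rightarrow> spinor" where
  "Gform a b \<sigma> c d M f = (\<lambda>p. coord a p *\<^sub>R pd b f p + \<sigma> *\<^sub>R (coord c p *\<^sub>R pd d f p) - (1/2::real) *\<^sub>R (M *v f p))"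

lemma smooth_Gform:
  assumes f: "smooth_H f" and bd: "b < 3" "d < 3"
  shows "smooth_H (Gform a b \<sigma> c d M f)"
proof -
  have 1: "smooth_H (\<lambda>p. coord a p *\<^sub>R pd b f p)"
    by (rule smooth_bilin[OF bounded_bilinear_scaleR smooth_coord smooth_pd[OF f bd(1)]])
  have 2: "smooth_H (\<lambda>p. coord c p *\<^sub>R pd d f p)"
    by (rule smooth_bilin[OF bounded_bilinear_scaleR smooth_coord smooth_pd[OF f bd(2)]])
  have 3: "smooth_H (\<lambda>p. \<sigma> *\<^sub>R (coord c p *\<^sub>R pd d f p))"
    by (rule smooth_linear[OF bounded_linear_scaleR_right 2])
  have 4: "smooth_H (\<lambda>p. (1/2::real) *\<^sub>R (M *v f p))"
    by (rule smooth_linear[OF bounded_linear_scaleR_right smooth_linear[OF bl_mv f]])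
  show ?thesis unfolding Gform_def by (rule smooth_diff_fun[OF smooth_add[OF 1 3] 4])
qed

lemma pd_coord_mul:
  assumes g: "smooth_H g" and q: "q \<in> Hs"
  shows "pd \<mu> (\<lambda>p. coord a p *\<^sub>R g p) q = coord a (dir \<mu>) *\<^sub>R g q + coord a q *\<^sub>R pd \<mu> g q"
  using pd_bilin[OF bounded_bilinear_scaleR q smooth_diffat[OF smooth_coord q] smooth_diffat[OF g q]]
        pd_coord[OF q] by simp

lemma pd_Gform:
  assumes f: "smooth_H f" and bd: "b < 3" "d < 3" and q: "q \<in> Hs"
  shows "pd \<mu> (Gform a b \<sigma> c d M f) q =
     coord a (dir \<mu>) *\<^sub>R pd b f q + coord a q *\<^sub>R pd \<mu> (pd b f) q
     + \<sigma> *\<^sub>R (coord c (dir \<mu>) *\<^sub>R pd d f q + coord c q *\<^sub>R pd \<mu> (pd d f) q)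
     - (1/2::real) *\<^sub>R (M *v pd \<mu> f q)"
proof -
  have 1: "smooth_H (\<lambda>p. coord a p *\<^sub>R pd b f p)"
    by (rule smooth_bilin[OF bounded_bilinear_scaleR smooth_coord smooth_pd[OF f bd(1)]])
  have 2: "smooth_H (\<lambda>p. coord c p *\<^sub>R pd d f p)"
    by (rule smooth_bilin[OF bounded_bilinear_scaleR smooth_coord smooth_pd[OF f bd(2)]])
  have 3: "smooth_H (\<lambda>p. \<sigma> *\<^sub>R (coord c p *\<^sub>R pd d f p))"
    by (rule smooth_linear[OF bounded_linear_scaleR_right 2])
  have 4: "smooth_H (\<lambda>p. (1/2::real) *\<^sub>R (M *v f p))"
    by (rule smooth_linear[OF bounded_linear_scaleR_right smooth_linear[OF bl_mv f]])
  have "pd \<mu> (Gform a b \<sigma> c d M f) q = pd \<mu> (\<lambda>p. coord a p *\<^sub>R pd b f p + \<sigma> *\<^sub>R (coord c p *\<^sub>R pd d f p)) q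
          - pd \<mu> (\<lambda>p. (1/2::real) *\<^sub>R (M *v f p)) q"
    unfolding Gform_def by (rule pd_diff[OF q smooth_diffat[OF smooth_add[OF 1 3] q] smooth_diffat[OF 4 q]])
  also have "pd \<mu> (\<lambda>p. coord a p *\<^sub>R pd b f p + \<sigma> *\<^sub>R (coord c p *\<^sub>R pd d f p)) q
     = pd \<mu> (\<lambda>p. coord a p *\<^sub>R pd b f p) q + pd \<mu> (\<lambda>p. \<sigma> *\<^sub>R (coord c p *\<^sub>R pd d f p)) q"
    by (rule pd_add[OF q smooth_diffat[OF 1 q] smooth_diffat[OF 3 q]])
  also have "pd \<mu> (\<lambda>p. \<sigma> *\<^sub>R (coord c p *\<^sub>R pd d f p)) q = \<sigma> *\<^sub>R pd \<mu> (\<lambda>p. coord c p *\<^sub>R pd d f p) q"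
    by (rule pd_linear[OF bounded_linear_scaleR_right q smooth_diffat[OF 2 q]])
  also have "pd \<mu> (\<lambda>p. (1/2::real) *\<^sub>R (M *v f p)) q = (1/2::real) *\<^sub>R pd \<mu> (\<lambda>p. M *v f p) q"
    by (rule pd_linear[OF bounded_linear_scaleR_right q smooth_diffat[OF smooth_linear[OF bl_mv f] q]])
  also have "pd \<mu> (\<lambda>p. M *v f p) q = M *v pd \<mu> f q"
    by (rule pd_linear[OF bl_mv q smooth_diffat[OF f q]])
  finally show ?thesis
    using pd_coord_mul[OF smooth_pd[OF f bd(1)] q] pd_coord_mul[OF smooth_pd[OF f bd(2)] q] by simp
qed

lemma Gamk_cases:
  "Gamk k f = (if k = 1 then pd 0 f else if k = 2 then pd 1 f else if k = 3 then pd 2 f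
     else if k = 4 then Gform 1 2 (-1) 2 1 (gam 1 ** gam 2) f
     else if k = 5 then Gform 0 1 1 1 0 (gam 0 ** gam 1) f
     else Gform 0 2 1 2 0 (gam 0 ** gam 2) f)"
  by (auto simp: fun_eq_iff Gamk_def Gform_def)

lemma smooth_Gamk: "smooth_H f \<Longrightarrow> smooth_H (Gamk k f)"
  unfolding Gamk_cases by (auto intro!: smooth_pd smooth_Gform)

lemma Gamk_local: "eqH f g \<Longrightarrow> eqH (Gamk k f) (Gamk k g)"
  unfolding eqH_def Gamk_def using pd_local[of _ f g] by (auto simp: eqH_def)

lemma comm_pd:
  assumes f: "smooth_H f" and a: "\<alpha> < 3" and q: "q \<in> Hs"
  shows "pd \<alpha> (dirac f) q = dirac (pd \<alpha> f) q"
  unfolding pd_dirac[OF f q] dirac_def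
  using pd_sym[OF f a _ q] by (intro sum.cong) auto

lemma Gform_at: "Gform a b \<sigma> c d M g q = coord a q *\<^sub>R pd b g q + \<sigma> *\<^sub>R (coord c q *\<^sub>R pd d g q) - (1/2::real) *\<^sub>R (M *v g q)"
  by (simp add: Gform_def)

lemma dirac_Gform:
  assumes f: "smooth_H f" and bd: "b < 3" "d < 3" and q: "q \<in> Hs"
  shows "dirac (Gform a b \<sigma> c d M f) q = (\<Sum>\<mu><3. gam \<mu> *v (
     coord a (dir \<mu>) *\<^sub>R pd b f q + coord a q *\<^sub>R pd \<mu> (pd b f) q
     + \<sigma> *\<^sub>R (coord c (dir \<mu>) *\<^sub>R pd d f q + coord c q *\<^sub>R pd \<mu> (pd d f) q)
     - (1/2::real) *\<^sub>R (M *v pd \<mu> f q)))"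
  unfolding dirac_def using pd_Gform[OF f bd q] by simp

lemma comm_Gamk:
  assumes f: "smooth_H f" and q: "q \<in> Hs"
  shows "Gamk k (dirac f) q = dirac (Gamk k f) q"
proof -
  have s: "pd \<mu> (pd \<nu> f) q = pd \<nu> (pd \<mu> f) q" if "\<mu> < 3" "\<nu> < 3" for \<mu> \<nu>
    using pd_sym[OF f that q] .
  note S = s[of 0 1] s[of 0 2] s[of 1 2]
  note simps = dirac_Gform[OF f _ _ q] Gform_at dirac_expand[of f q] pd_dirac[OF f q] sum3 gam_mv mm_mv coord_def dir_def
  consider "k = 1" | "k = 2" | "k = 3" | "k = 4" | "k = 5" | "k \<noteq> 1 \<and> k \<noteq> 2 \<and> k \<noteq> 3 \<and> k \<noteq> 4 \<and> k \<noteq> 5" by blast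
  then show ?thesis
  proof cases
    case 1 then show ?thesis unfolding Gamk_cases using comm_pd[OF f _ q] by simp
  next
    case 2 then show ?thesis unfolding Gamk_cases using comm_pd[OF f _ q] by simp
  next
    case 3 then show ?thesis unfolding Gamk_cases using comm_pd[OF f _ q] by simp
  next
    case 4 then show ?thesis unfolding Gamk_cases using S
      by (simp add: simps vec_eq_iff forall_2 scaleR_comp algebra_simps del: vector_scaleR_component)
  next
    case 5 then show ?thesis unfolding Gamk_cases using S
      by (simp add: simps vec_eq_iff forall_2 scaleR_comp algebra_simps del: vector_scaleR_component)
  next
    case 6 then show ?thesis unfolding Gamk_cases using S
      by (simp add: simps vec_eq_iff forall_2 scaleR_comp algebra_simps del: vector_scaleR_component)
  qed
qed




definition Dop :: "(pt \<Rightarrow> spinor) \<Rightarrow> pt \<Rightarrow> spinor" where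
  "Dop f = (\<lambda>q. (- \<i>) *s dirac f q)"

lemma Gamk_smult:
  assumes h: "smooth_H h" and q: "q \<in> Hs"
  shows "Gamk k (\<lambda>p. c *s h p) q = c *s Gamk k h q"
proof -
  have "pd \<mu> (\<lambda>p. c *s h p) q = c *s pd \<mu> h q" for \<mu>
    by (rule pd_linear[OF bl_smult q smooth_diffat[OF h q]])
  then show ?thesis
    unfolding Gamk_def
    by (simp add: vec_eq_iff forall_2 gam_mv mm_mv scaleR_comp algebra_simps del: vector_scaleR_component)
qed

definition Good :: "((pt \<Rightarrow> spinor) \<Rightarrow> (pt \<Rightarrow> spinor)) \<Rightarrow> bool" where
  "Good F \<longleftrightarrow> (\<forall>f g. eqH f g \<longrightarrow> eqH (F f) (F g)) \<and> (\<forall>f. smooth_H f \<longrightarrow> smooth_H (F f))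
     \<and> (\<forall>f. smooth_H f \<longrightarrow> eqH (F (Dop f)) (Dop (F f)))"

lemma Good_Gamk: "Good (Gamk k)"
  unfolding Good_def
proof (intro conjI allI impI)
  show "eqH f g \<Longrightarrow> eqH (Gamk k f) (Gamk k g)" for f g by (rule Gamk_local)
  show "smooth_H f \<Longrightarrow> smooth_H (Gamk k f)" for f by (rule smooth_Gamk)
  fix f :: "pt \<Rightarrow> spinor" assume f: "smooth_H f"
  show "eqH (Gamk k (Dop f)) (Dop (Gamk k f))"
    unfolding eqH_def Dop_def
  proof
    fix p assume p: "p \<in> Hs"
    show "Gamk k (\<lambda>q. (- \<i>) *s dirac f q) p = (- \<i>) *s dirac (Gamk k f) p"
      by (simp only: Gamk_smult[OF smooth_dirac[OF f] p] comm_Gamk[OF f p])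
  qed
qed

lemma Good_id: "Good id"
  by (simp add: Good_def)

lemma Good_comp: "Good F \<Longrightarrow> Good G \<Longrightarrow> Good (F \<circ> G)"
  unfolding Good_def o_def
proof (intro conjI allI impI; elim conjE)
  fix f g :: "pt \<Rightarrow> spinor" assume "\<forall>f g. eqH f g \<longrightarrow> eqH (F f) (F g)" "\<forall>f g. eqH f g \<longrightarrow> eqH (G f) (G g)" "eqH f g"
  then show "eqH (F (G f)) (F (G g))" by blast
next
  fix f :: "pt \<Rightarrow> spinor" assume "\<forall>f. smooth_H f \<longrightarrow> smooth_H (F f)" "\<forall>f. smooth_H f \<longrightarrow> smooth_H (G f)" "smooth_H f"
  then show "smooth_H (F (G f))" by blast
next
  fix f :: "pt \<Rightarrow> spinor" assume A: "\<forall>f g. eqH f g \<longrightarrow> eqH (F f) (F g)" "\<forall>f. smooth_H f \<longrightarrow> smooth_H (G f)"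
    "\<forall>f. smooth_H f \<longrightarrow> eqH (F (Dop f)) (Dop (F f))" "\<forall>f. smooth_H f \<longrightarrow> eqH (G (Dop f)) (Dop (G f))"
    "smooth_H f"
  then have "eqH (F (G (Dop f))) (F (Dop (G f)))" by blast
  moreover have "eqH (F (Dop (G f))) (Dop (F (G f)))" using A by blast
  ultimately show "eqH (F (G (Dop f))) (Dop (F (G f)))" by (rule eqH_trans)
qed

lemma Good_funpow: "Good F \<Longrightarrow> Good (F ^^ n)"
  by (induction n) (auto intro: Good_comp simp: Good_id)

lemma Good_foldr: "Good (foldr (\<lambda>k g. (Gamk k ^^ I k) \<circ> g) ks id)"
proof (induction ks)
  case Nil show ?case by (simp add: Good_def)
next
  case (Cons a ks)
  have eq: "foldr (\<lambda>k g. (Gamk k ^^ I k) \<circ> g) (a # ks) id = (Gamk a ^^ I a) \<circ> foldr (\<lambda>k g. (Gamk k ^^ I k) \<circ> g) ks id"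
    by simp
  show ?case unfolding eq by (rule Good_comp[OF Good_funpow[OF Good_Gamk] Cons.IH])
qed

lemma Good_GamI: "Good (GamI I)"
  unfolding GamI_def by (rule Good_foldr)

lemma scaleR_mv: "(r *\<^sub>R A) *v (x::complex^2) = r *\<^sub>R (A *v x)"
  by (simp add: vec_eq_iff matrix_vector_mult_def scaleR_sum_right)

lemma omega_sq: "rad p \<noteq> 0 \<Longrightarrow> (omega 1 p)\<^sup>2 + (omega 2 p)\<^sup>2 = 1"
proof -
  assume r: "rad p \<noteq> 0"
  have e: "(rad p)\<^sup>2 = (coord 1 p)\<^sup>2 + (coord 2 p)\<^sup>2" unfolding rad_def by simp
  have "(omega 1 p)\<^sup>2 + (omega 2 p)\<^sup>2 = ((coord 1 p)\<^sup>2 + (coord 2 p)\<^sup>2) / (rad p)\<^sup>2"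
    unfolding omega_def by (simp add: power_divide add_divide_distrib)
  also have "\<dots> = (rad p)\<^sup>2 / (rad p)\<^sup>2" by (simp only: e)
  also have "\<dots> = 1" using r by simp
  finally show ?thesis .
qed

lemma final_algebra:
  assumes r: "rad p \<noteq> 0" and X: "X = (- \<i>) *s (gam 0 *v g 0 + gam 1 *v g 1 + gam 2 *v g 2)"
  shows "X - (\<Sum>a\<in>{1,2}. omega a p *\<^sub>R ((gam 0 ** gam a) *v X))
     = - (\<i> *s ((mat 1 - (\<Sum>a\<in>{1,2}. omega a p *\<^sub>R (gam 0 ** gam a)))
                     *v (\<Sum>b\<in>{1,2}. gam b *v (g b + omega b p *\<^sub>R g 0))))"
proof -
  define w1 where "w1 = omega 1 p"
  define w2 where "w2 = omega 2 p"
  have w: "w1 * w1 + w2 * w2 = 1" using omega_sq[OF r] by (simp add: w1_def w2_def power2_eq_square)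
  have wsum: "complex_of_real (omega (Suc 0) p) * complex_of_real (omega (Suc 0) p)
      + complex_of_real (omega 2 p) * complex_of_real (omega 2 p) = 1"
    using w unfolding w1_def w2_def by (metis One_nat_def of_real_1 of_real_add of_real_mult)
  show ?thesis
    unfolding X
    apply (simp add: matrix_vector_mult_diff_rdistrib matrix_vector_mult_add_rdistrib scaleR_mv mm_mv gam_mv
        vec_eq_iff forall_2 scaleR_comp algebra_simps del: vector_scaleR_component)
    apply (rule conjI)
    using wsum apply algebra
    using wsum apply algebra
    done
qed




lemma maxsq_deriv: "((\<lambda>r::real. (max r 0)\<^sup>2) has_real_derivative 2 * max r 0) (at r)"
proof (cases "r = 0")
  case True
  have ev: "\<forall>\<^sub>F h in at (0::real). (max (0 + h) 0)\<^sup>2 / h - (max 0 0)\<^sup>2 / h = max h 0"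
    unfolding eventually_at_filter
    by (intro always_eventually allI impI) (auto simp: max_def power2_eq_square)
  have "((\<lambda>h::real. max h 0) \<longlongrightarrow> max 0 0) (at 0)"
    by (intro tendsto_intros)
  then have "((\<lambda>h::real. (max (0 + h) 0)\<^sup>2 / h - (max 0 0)\<^sup>2 / h) \<longlongrightarrow> 0) (at 0)"
    using tendsto_cong[OF ev] by simp
  then have "((\<lambda>h::real. ((max (0 + h) 0)\<^sup>2 - (max 0 0)\<^sup>2) / h) \<longlongrightarrow> 2 * max 0 0) (at 0)"
    by (simp add: diff_divide_distrib)
  then show ?thesis using True by (simp add: DERIV_def)
next
  case False
  show ?thesis
  proof (cases "r > 0")
    case True
    have "((\<lambda>r::real. r\<^sup>2) has_real_derivative 2 * r) (at r)"
      using DERIV_pow[of 2 r] by simp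
    then have "((\<lambda>r::real. (max r 0)\<^sup>2) has_real_derivative 2 * r) (at r)"
      by (rule has_field_derivative_transform_within_open[where S="{0<..}"]) (use True in \<open>auto simp: max_def\<close>)
    then show ?thesis using True by simp
  next
    case F2: False
    then have r: "r < 0" using False by simp
    have "((\<lambda>r::real. 0) has_real_derivative 0) (at r)" by simp
    then have "((\<lambda>r::real. 0) has_real_derivative 2 * max r 0) (at r)" using r by simp
    then show ?thesis
      by (rule has_field_derivative_transform_within_open[where S="{..<0}"]) (use r in \<open>auto simp: max_def\<close>)
  qed
qed

lemma inner_cvec: "inner (x::complex^2) y = Re (cnj (x$1) * y$1) + Re (cnj (x$2) * y$2)"
  by (simp add: inner_vec_def sum_2 inner_complex_def)

lemma energy_identity:
  fixes \<phi> \<phi>0 \<phi>1 \<phi>2 :: "complex^2"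
  assumes "gam 0 *v \<phi>0 + gam 1 *v \<phi>1 + gam 2 *v \<phi>2 = 0"
  shows "2 * inner \<phi> \<phi>0 + (inner \<phi>1 ((gam 0 ** gam 1) *v \<phi>) + inner \<phi> ((gam 0 ** gam 1) *v \<phi>1))
     + (inner \<phi>2 ((gam 0 ** gam 2) *v \<phi>) + inner \<phi> ((gam 0 ** gam 2) *v \<phi>2)) = 0"
proof -
  have c1: "(gam 0 *v \<phi>0 + gam 1 *v \<phi>1 + gam 2 *v \<phi>2)$1 = 0" and c2: "(gam 0 *v \<phi>0 + gam 1 *v \<phi>1 + gam 2 *v \<phi>2)$2 = 0"
    using assms by simp_all
  have e1: "\<phi>0$1 + \<phi>1$2 + (- \<i> * \<phi>2$2) = 0" using c1 by (simp add: gam_mv)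
  have e2: "- \<phi>0$2 + - \<phi>1$1 + (- \<i> * \<phi>2$1) = 0" using c2 by (simp add: gam_mv)
  have a0: "\<phi>0$1 = \<i> * \<phi>2$2 - \<phi>1$2" using e1 by algebra
  have b0: "\<phi>0$2 = - \<phi>1$1 - \<i> * \<phi>2$1" using e2 by algebra
  show ?thesis
    by (simp add: inner_cvec mm_mv gam_mv a0 b0 algebra_simps)
qed

lemma energy_ineq:
  fixes \<phi> :: "complex^2"
  assumes L: "L \<ge> 0" and xi: "\<xi>1\<^sup>2 + \<xi>2\<^sup>2 \<le> L\<^sup>2"
  shows "0 \<le> L * inner \<phi> \<phi> + \<xi>1 * inner \<phi> ((gam 0 ** gam 1) *v \<phi>) + \<xi>2 * inner \<phi> ((gam 0 ** gam 2) *v \<phi>)"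
proof -
  define a1 where "a1 = Re (\<phi>$1)"
  define a2 where "a2 = Im (\<phi>$1)"
  define b1 where "b1 = Re (\<phi>$2)"
  define b2 where "b2 = Im (\<phi>$2)"
  define A where "A = a1\<^sup>2 + a2\<^sup>2"
  define B where "B = b1\<^sup>2 + b2\<^sup>2"
  define Rz where "Rz = a1 * b1 + a2 * b2"
  define Iz where "Iz = a1 * b2 - a2 * b1"
  have N: "inner \<phi> \<phi> = A + B" unfolding inner_cvec A_def B_def a1_def a2_def b1_def b2_def
    by (simp add: power2_eq_square)
  have J1: "inner \<phi> ((gam 0 ** gam 1) *v \<phi>) = 2 * Rz"
    by (simp add: inner_cvec mm_mv gam_mv Rz_def a1_def a2_def b1_def b2_def algebra_simps)
  have J2: "inner \<phi> ((gam 0 ** gam 2) *v \<phi>) = 2 * Iz"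
    by (simp add: inner_cvec mm_mv gam_mv Iz_def a1_def a2_def b1_def b2_def algebra_simps)
  define S where "S = \<xi>1 * Rz + \<xi>2 * Iz"
  have lag: "Rz\<^sup>2 + Iz\<^sup>2 = A * B" unfolding Rz_def Iz_def A_def B_def by (simp add: power2_eq_square algebra_simps)
  have cs: "S\<^sup>2 \<le> (\<xi>1\<^sup>2 + \<xi>2\<^sup>2) * (Rz\<^sup>2 + Iz\<^sup>2)"
  proof -
    have "(\<xi>1\<^sup>2 + \<xi>2\<^sup>2) * (Rz\<^sup>2 + Iz\<^sup>2) - S\<^sup>2 = (\<xi>1 * Iz - \<xi>2 * Rz)\<^sup>2"
      unfolding S_def by (simp add: power2_eq_square algebra_simps)
    then show ?thesis by (metis diff_ge_0_iff_ge zero_le_power2)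
  qed
  have AB: "A \<ge> 0" "B \<ge> 0" unfolding A_def B_def by simp_all
  have "S\<^sup>2 \<le> L\<^sup>2 * (A * B)"
    using cs xi lag by (metis AB mult_nonneg_nonneg mult_right_mono order_trans)
  also have "\<dots> \<le> (L * (A + B) / 2)\<^sup>2"
  proof -
    have "4 * (A * B) \<le> (A + B)\<^sup>2"
    proof -
      have "(A + B)\<^sup>2 - 4 * (A * B) = (A - B)\<^sup>2" by (simp add: power2_eq_square algebra_simps)
      then show ?thesis by (metis diff_ge_0_iff_ge zero_le_power2)
    qed
    then have "L\<^sup>2 * (4 * (A * B)) \<le> L\<^sup>2 * (A + B)\<^sup>2" by (simp add: mult_left_mono)
    then show ?thesis by (simp add: power2_eq_square algebra_simps)
  qed
  finally have "\<bar>S\<bar> \<le> L * (A + B) / 2"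
    using L AB by (metis abs_le_square_iff abs_of_nonneg add_nonneg_nonneg divide_nonneg_pos mult_nonneg_nonneg zero_less_numeral)
  then have h: "0 \<le> L * (A + B) + 2 * S" by (simp add: abs_le_iff)
  show ?thesis unfolding N J1 J2 using h unfolding S_def by (simp add: algebra_simps)
qed




lemma slice_t:
  assumes F: "smooth_H F" and t: "t \<ge> 0" and A: "A \<subseteq> {0..}"
  shows "((\<lambda>t. F (t, a, b)) has_vector_derivative pd 0 F (t, a, b)) (at t within A)"
proof -
  have e: "\<And>t. (t, a, b) = (0, a, b) + t *\<^sub>R dir 0" by (simp add: dir_def)
  have "((\<lambda>t. F ((0, a, b) + t *\<^sub>R dir 0)) has_vector_derivative pd 0 F ((0, a, b) + t *\<^sub>R dir 0)) (at t within A)"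
    by (rule slice_pd) (use smooth_diffat[OF F] t A in \<open>auto simp: dir_def Hs_def\<close>)
  then show ?thesis by (simp only: e[symmetric])
qed

lemma slice_x1:
  assumes F: "smooth_H F" and t: "t \<ge> 0"
  shows "((\<lambda>x. F (t, x, b)) has_vector_derivative pd 1 F (t, x, b)) (at x within A)"
proof -
  have e: "\<And>x. (t, x, b) = (t, 0, b) + x *\<^sub>R dir 1" by (simp add: dir_def)
  have "((\<lambda>x. F ((t, 0, b) + x *\<^sub>R dir 1)) has_vector_derivative pd 1 F ((t, 0, b) + x *\<^sub>R dir 1)) (at x within A)"
    by (rule slice_pd) (use smooth_diffat[OF F] t in \<open>auto simp: dir_def Hs_def\<close>)
  then show ?thesis by (simp only: e[symmetric])
qed

lemma slice_x2:
  assumes F: "smooth_H F" and t: "t \<ge> 0"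
  shows "((\<lambda>x. F (t, a, x)) has_vector_derivative pd 2 F (t, a, x)) (at x within A)"
proof -
  have e: "\<And>x. (t, a, x) = (t, a, 0) + x *\<^sub>R dir 2" by (simp add: dir_def)
  have "((\<lambda>x. F ((t, a, 0) + x *\<^sub>R dir 2)) has_vector_derivative pd 2 F ((t, a, 0) + x *\<^sub>R dir 2)) (at x within A)"
    by (rule slice_pd) (use smooth_diffat[OF F] t in \<open>auto simp: dir_def Hs_def\<close>)
  then show ?thesis by (simp only: e[symmetric])
qed

lemma inner_deriv:
  assumes "(f has_vector_derivative f') (at x within A)" "(g has_vector_derivative g') (at x within A)"
  shows "((\<lambda>x. inner (f x) (g x)) has_real_derivative (inner (f x) g' + inner f' (g x))) (at x within A)"
  using bounded_bilinear.has_vector_derivative[OF bounded_bilinear_inner assms]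
  by (simp add: has_real_derivative_iff_has_vector_derivative)

lemma mv_vderiv:
  fixes f :: "real \<Rightarrow> complex^2" and M :: "complex^2^2"
  assumes "(f has_vector_derivative f') (at x within A)"
  shows "((\<lambda>x. M *v f x) has_vector_derivative M *v f') (at x within A)"
  using bounded_linear.has_vector_derivative[OF matrix_vector_mul_bounded_linear assms] .

lemma cont_mv[continuous_intros]: "continuous_on S f \<Longrightarrow> continuous_on S (\<lambda>x. (M::complex^2^2) *v f x)"
  using bounded_linear.continuous_on[OF matrix_vector_mul_bounded_linear] .

lemma chi_deriv:
  assumes "((\<lambda>x. s x) has_real_derivative s') (at x within A)"
  shows "((\<lambda>x. (max (s x) 0)\<^sup>2) has_real_derivative (2 * max (s x) 0 * s')) (at x within A)"
  using DERIV_chain2[OF maxsq_deriv assms] by simp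




lemma uniqueness:
  fixes \<Phi> :: "pt \<Rightarrow> spinor"
  assumes s: "smooth_H \<Phi>" and dE: "\<And>p. p \<in> Hs \<Longrightarrow> dirac \<Phi> p = 0"
    and i0: "\<And>x1 x2. \<Phi> (0, x1, x2) = 0" and p: "p \<in> Hs"
  shows "\<Phi> p = 0"
proof -
  obtain t0 y1 y2 where pe: "p = (t0, y1, y2)" by (cases p) auto
  have t0: "t0 \<ge> 0" using p pe by (simp add: Hs_def)
  show ?thesis
  proof (cases "t0 = 0")
    case True then show ?thesis using pe i0 by simp
  next
    case False
    then have t0p: "t0 > 0" using t0 by simp
    define R where "R = t0 + 1"
    define P where "P = (\<lambda>(t::real) (z::real\<times>real). (t, fst z, snd z))"
    define sf where "sf = (\<lambda>(t::real) (z::real\<times>real). (R - t)\<^sup>2 - ((fst z - y1)\<^sup>2 + (snd z - y2)\<^sup>2))"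
    define m where "m = (\<lambda>t z. max (sf t z) 0)"
    define chi where "chi = (\<lambda>t z. (m t z)\<^sup>2)"
    define M1 where "M1 = gam 0 ** gam 1"
    define M2 where "M2 = gam 0 ** gam 2"
    define N where "N = (\<lambda>q. inner (\<Phi> q) (\<Phi> q))"
    define J1 where "J1 = (\<lambda>q. inner (\<Phi> q) (M1 *v \<Phi> q))"
    define J2 where "J2 = (\<lambda>q. inner (\<Phi> q) (M2 *v \<Phi> q))"
    define dN where "dN = (\<lambda>q. 2 * inner (\<Phi> q) (pd 0 \<Phi> q))"
    define dJ1 where "dJ1 = (\<lambda>q. inner (\<Phi> q) (M1 *v pd 1 \<Phi> q) + inner (pd 1 \<Phi> q) (M1 *v \<Phi> q))"
    define dJ2 where "dJ2 = (\<lambda>q. inner (\<Phi> q) (M2 *v pd 2 \<Phi> q) + inner (pd 2 \<Phi> q) (M2 *v \<Phi> q))"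
    define U where "U = {0..t0}"
    define a1 where "a1 = y1 - R"
    define a2 where "a2 = y2 - R"
    define b1 where "b1 = y1 + R"
    define b2 where "b2 = y2 + R"
    define B where "B = cbox (a1, a2) (b1, b2)"
    define G where "G = (\<lambda>t z. chi t z * N (P t z))"
    define Gt where "Gt = (\<lambda>t z. (2 * m t z * (- 2 * (R - t))) * N (P t z) + chi t z * dN (P t z))"
    define E where "E = (\<lambda>t. integral B (G t))"
    define K1 where "K1 = (\<lambda>t z. chi t z * J1 (P t z))"
    define K2 where "K2 = (\<lambda>t z. chi t z * J2 (P t z))"
    define K1' where "K1' = (\<lambda>t z. (2 * m t z * (- 2 * (fst z - y1))) * J1 (P t z) + chi t z * dJ1 (P t z))"
    define K2' where "K2' = (\<lambda>t z. (2 * m t z * (- 2 * (snd z - y2))) * J2 (P t z) + chi t z * dJ2 (P t z))"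
    define W where "W = (\<lambda>t z. 4 * m t z * ((R - t) * N (P t z) + (fst z - y1) * J1 (P t z) + (snd z - y2) * J2 (P t z)))"

    have PH: "t \<ge> 0 \<Longrightarrow> P t z \<in> Hs" for t z by (simp add: P_def Hs_def)
    have cPhi: "continuous_on Hs \<Phi>" by (rule smooth_cont[OF s])
    have cPd: "continuous_on Hs (pd \<mu> \<Phi>)" if "\<mu> < 3" for \<mu> by (rule smooth_cont[OF smooth_pd[OF s that]])
    have contP: "continuous_on UNIV (\<lambda>x::real\<times>(real\<times>real). P (fst x) (snd x))"
      unfolding P_def by (intro continuous_intros)
    have cF: "continuous_on Hs F \<Longrightarrow> continuous_on {x. fst x \<ge> 0} (\<lambda>x::real\<times>(real\<times>real). F (P (fst x) (snd x)))"
      for F :: "pt \<Rightarrow> spinor"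
      by (rule continuous_on_compose2[OF _ continuous_on_subset[OF contP]]) (auto simp: PH)
    have UB: "U \<times> B \<subseteq> {x. fst x \<ge> 0}" unfolding U_def by auto
    have cPhiUB: "continuous_on (U \<times> B) (\<lambda>x. \<Phi> (P (fst x) (snd x)))"
      by (rule continuous_on_subset[OF cF[OF cPhi] UB])
    have cPdUB: "\<mu> < 3 \<Longrightarrow> continuous_on (U \<times> B) (\<lambda>x. pd \<mu> \<Phi> (P (fst x) (snd x)))" for \<mu>
      by (rule continuous_on_subset[OF cF[OF cPd] UB])
    have cPhiB: "t \<in> U \<Longrightarrow> continuous_on B (\<lambda>z. F (P t z))" if cFUB: "continuous_on (U \<times> B) (\<lambda>x. F (P (fst x) (snd x)))"
      for F :: "pt \<Rightarrow> spinor" and t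
    proof -
      assume t: "t \<in> U"
      have "continuous_on B (\<lambda>z. (t, z))" by (intro continuous_intros)
      from continuous_on_compose2[OF cFUB this] t show ?thesis by auto
    qed
    have Rt: "t \<in> U \<Longrightarrow> 1 \<le> R - t \<and> R - t \<le> R" for t unfolding U_def R_def by auto
    have ident: "q \<in> Hs \<Longrightarrow> dN q = - dJ1 q - dJ2 q" for q
    proof -
      assume q: "q \<in> Hs"
      have "gam 0 *v pd 0 \<Phi> q + gam 1 *v pd 1 \<Phi> q + gam 2 *v pd 2 \<Phi> q = 0"
        using dE[OF q] by (simp add: dirac_expand)
      from energy_identity[OF this, of "\<Phi> q"] show ?thesis
        by (simp add: dN_def dJ1_def dJ2_def M1_def M2_def algebra_simps)
    qed
    have Gderiv: "((\<lambda>t. G t z) has_real_derivative Gt t z) (at t within U)" if t: "t \<in> U" for t z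
    proof -
      have sd: "((\<lambda>t. sf t z) has_real_derivative (- 2 * (R - t))) (at t within U)"
        unfolding sf_def by (auto intro!: derivative_eq_intros)
      have cd: "((\<lambda>t. chi t z) has_real_derivative (2 * m t z * (- 2 * (R - t)))) (at t within U)"
        unfolding chi_def m_def by (rule chi_deriv[OF sd])
      have t0': "t \<ge> 0" using t U_def by simp
      have Ud: "U \<subseteq> {0..}" unfolding U_def by auto
      have pd0: "((\<lambda>t. \<Phi> (t, fst z, snd z)) has_vector_derivative pd 0 \<Phi> (t, fst z, snd z)) (at t within U)"
        by (rule slice_t[OF s t0' Ud])
      have nd: "((\<lambda>t. N (P t z)) has_real_derivative dN (P t z)) (at t within U)"
        unfolding N_def dN_def P_def using inner_deriv[OF pd0 pd0] by (simp add: inner_commute)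
      show ?thesis unfolding G_def Gt_def
        by (rule DERIV_cong[OF DERIV_mult'[OF cd nd]]) (simp add: algebra_simps)
    qed
    have cM: "continuous_on (U \<times> B) (\<lambda>x. m (fst x) (snd x))"
      unfolding m_def sf_def by (intro continuous_intros)
    have cGt: "continuous_on (U \<times> B) (\<lambda>x. Gt (fst x) (snd x))"
      unfolding Gt_def chi_def N_def dN_def
      by (intro continuous_intros cM cPhiUB cPdUB) simp_all
    have cG: "continuous_on (U \<times> B) (\<lambda>x. G (fst x) (snd x))"
      unfolding G_def chi_def N_def
      by (intro continuous_intros cM cPhiUB)
    have cK1': "continuous_on (U \<times> B) (\<lambda>x. K1' (fst x) (snd x))"
      unfolding K1'_def chi_def J1_def dJ1_def
      by (intro continuous_intros cM cPhiUB cPdUB) simp_all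
    have cK2': "continuous_on (U \<times> B) (\<lambda>x. K2' (fst x) (snd x))"
      unfolding K2'_def chi_def J2_def dJ2_def
      by (intro continuous_intros cM cPhiUB cPdUB) simp_all
    have cW: "continuous_on (U \<times> B) (\<lambda>x. W (fst x) (snd x))"
      unfolding W_def J1_def J2_def N_def
      by (intro continuous_intros cM cPhiUB)
    have restr: "continuous_on (U \<times> B) (\<lambda>x. H (fst x) (snd x)) \<Longrightarrow> t \<in> U \<Longrightarrow> continuous_on B (H t)"
      for H :: "real \<Rightarrow> real \<times> real \<Rightarrow> real" and t
    proof -
      assume cH: "continuous_on (U \<times> B) (\<lambda>x. H (fst x) (snd x))" and t: "t \<in> U"
      have "continuous_on B (\<lambda>z. (t, z))" by (intro continuous_intros)
      from continuous_on_compose2[OF cH this] t show ?thesis by auto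
    qed
    have Bbox: "B = cbox (a1, a2) (b1, b2)" by (simp add: B_def)
    have intB: "t \<in> U \<Longrightarrow> continuous_on (U \<times> B) (\<lambda>x. H (fst x) (snd x)) \<Longrightarrow> H t integrable_on B"
      for H :: "real \<Rightarrow> real \<times> real \<Rightarrow> real" and t
      unfolding Bbox by (rule integrable_continuous) (use restr Bbox in auto)
    have Ederiv: "(E has_real_derivative integral B (Gt t)) (at t within U)" if t: "t \<in> U" for t
      unfolding E_def Bbox
    proof (rule leibniz_rule_field_derivative[where fx=Gt])
      show "\<And>x z. x \<in> U \<Longrightarrow> z \<in> cbox (a1, a2) (b1, b2) \<Longrightarrow> ((\<lambda>x. G x z) has_real_derivative Gt x z) (at x within U)"
        using Gderiv by blast
      show "\<And>x. x \<in> U \<Longrightarrow> G x integrable_on cbox (a1, a2) (b1, b2)"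
        using intB[OF _ cG] Bbox by simp
      show "continuous_on (U \<times> cbox (a1, a2) (b1, b2)) (\<lambda>(x, t). Gt x t)"
        using cGt Bbox by (simp add: case_prod_beta)
      show "t \<in> U" by (rule t)
      show "convex U" unfolding U_def by (rule convex_real_interval)
    qed
    have m0: "m t z = 0" if t: "t \<in> U" and bd: "(snd z - y2)\<^sup>2 = R\<^sup>2 \<or> (fst z - y1)\<^sup>2 = R\<^sup>2" for t z
    proof -
      have h: "(R - t)\<^sup>2 \<le> R\<^sup>2" using Rt[OF t] by (intro power_mono) auto
      have h1: "0 \<le> (fst z - y1)\<^sup>2" and h2: "0 \<le> (snd z - y2)\<^sup>2" by simp_all
      have "sf t z \<le> 0" using bd
      proof
        assume "(snd z - y2)\<^sup>2 = R\<^sup>2" then show ?thesis unfolding sf_def using h h1 by linarith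
      next
        assume "(fst z - y1)\<^sup>2 = R\<^sup>2" then show ?thesis unfolding sf_def using h h2 by linarith
      qed
      then show ?thesis unfolding m_def by simp
    qed
    have ab: "a1 \<le> b1" "a2 \<le> b2" unfolding a1_def b1_def a2_def b2_def R_def using t0 by auto
    have eb: "(b2 - y2)\<^sup>2 = R\<^sup>2" "(a2 - y2)\<^sup>2 = R\<^sup>2" "(b1 - y1)\<^sup>2 = R\<^sup>2" "(a1 - y1)\<^sup>2 = R\<^sup>2"
      unfolding a1_def b1_def a2_def b2_def by (simp_all add: power2_eq_square)
    have dK2: "((\<lambda>y. K2 t (x, y)) has_vector_derivative K2' t (x, y)) (at y within A)" if t: "t \<in> U" for t x y A
    proof -
      have t0': "t \<ge> 0" using t U_def by simp
      have sd: "((\<lambda>y. sf t (x, y)) has_real_derivative (- 2 * (y - y2))) (at y within A)"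
        unfolding sf_def by (auto intro!: derivative_eq_intros)
      have cd: "((\<lambda>y. chi t (x, y)) has_real_derivative (2 * m t (x, y) * (- 2 * (y - y2)))) (at y within A)"
        unfolding chi_def m_def by (rule chi_deriv[OF sd])
      have pd2: "((\<lambda>y. \<Phi> (t, x, y)) has_vector_derivative pd 2 \<Phi> (t, x, y)) (at y within A)"
        by (rule slice_x2[OF s t0'])
      have jd: "((\<lambda>y. J2 (P t (x, y))) has_real_derivative dJ2 (P t (x, y))) (at y within A)"
        unfolding J2_def dJ2_def P_def using inner_deriv[OF pd2 mv_vderiv[OF pd2]] by simp
      have "((\<lambda>y. K2 t (x, y)) has_real_derivative K2' t (x, y)) (at y within A)"
        unfolding K2_def K2'_def
        by (rule DERIV_cong[OF DERIV_mult'[OF cd jd]]) (simp add: algebra_simps)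
      then show ?thesis by (simp add: has_real_derivative_iff_has_vector_derivative)
    qed
    have dK1: "((\<lambda>x. K1 t (x, y)) has_vector_derivative K1' t (x, y)) (at x within A)" if t: "t \<in> U" for t x y A
    proof -
      have t0': "t \<ge> 0" using t U_def by simp
      have sd: "((\<lambda>x. sf t (x, y)) has_real_derivative (- 2 * (x - y1))) (at x within A)"
        unfolding sf_def by (auto intro!: derivative_eq_intros)
      have cd: "((\<lambda>x. chi t (x, y)) has_real_derivative (2 * m t (x, y) * (- 2 * (x - y1)))) (at x within A)"
        unfolding chi_def m_def by (rule chi_deriv[OF sd])
      have pd1: "((\<lambda>x. \<Phi> (t, x, y)) has_vector_derivative pd 1 \<Phi> (t, x, y)) (at x within A)"
        by (rule slice_x1[OF s t0'])
      have jd: "((\<lambda>x. J1 (P t (x, y))) has_real_derivative dJ1 (P t (x, y))) (at x within A)"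
        unfolding J1_def dJ1_def P_def using inner_deriv[OF pd1 mv_vderiv[OF pd1]] by simp
      have "((\<lambda>x. K1 t (x, y)) has_real_derivative K1' t (x, y)) (at x within A)"
        unfolding K1_def K1'_def
        by (rule DERIV_cong[OF DERIV_mult'[OF cd jd]]) (simp add: algebra_simps)
      then show ?thesis by (simp add: has_real_derivative_iff_has_vector_derivative)
    qed
    have iK2: "integral B (K2' t) = 0" if t: "t \<in> U" for t
    proof -
      have inner0: "integral (cbox a2 b2) (\<lambda>y. K2' t (x, y)) = 0" for x
      proof -
        have "((\<lambda>y. K2' t (x, y)) has_integral (K2 t (x, b2) - K2 t (x, a2))) {a2..b2}"
          by (rule fundamental_theorem_of_calculus[OF ab(2)]) (use dK2[OF t] in blast)
        moreover have "K2 t (x, b2) = 0" "K2 t (x, a2) = 0"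
          unfolding K2_def chi_def using m0[OF t] eb by auto
        ultimately show ?thesis by (simp add: cbox_interval integral_unique)
      qed
      have "integral B (K2' t) = integral (cbox a1 b1) (\<lambda>x. integral (cbox a2 b2) (\<lambda>y. K2' t (x, y)))"
        unfolding Bbox by (rule integral_prod_continuous) (use restr[OF cK2' t] Bbox in simp)
      also have "\<dots> = 0" using inner0 by simp
      finally show ?thesis .
    qed
    have iK1: "integral B (K1' t) = 0" if t: "t \<in> U" for t
    proof -
      have inner0: "integral (cbox a1 b1) (\<lambda>x. K1' t (x, y)) = 0" for y
      proof -
        have "((\<lambda>x. K1' t (x, y)) has_integral (K1 t (b1, y) - K1 t (a1, y))) {a1..b1}"
          by (rule fundamental_theorem_of_calculus[OF ab(1)]) (use dK1[OF t] in blast)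
        moreover have "K1 t (b1, y) = 0" "K1 t (a1, y) = 0"
          unfolding K1_def chi_def using m0[OF t] eb by auto
        ultimately show ?thesis by (simp add: cbox_interval integral_unique)
      qed
      have cc: "continuous_on (cbox (a1, a2) (b1, b2)) (\<lambda>(x, y). K1' t (x, y))"
        using restr[OF cK1' t] Bbox by (simp add: case_prod_beta)
      have "integral B (K1' t) = integral (cbox a1 b1) (\<lambda>x. integral (cbox a2 b2) (\<lambda>y. K1' t (x, y)))"
        unfolding Bbox by (rule integral_prod_continuous) (use restr[OF cK1' t] Bbox in simp)
      also have "\<dots> = integral (cbox a2 b2) (\<lambda>y. integral (cbox a1 b1) (\<lambda>x. K1' t (x, y)))"
        by (rule integral_swap_continuous[OF cc])
      also have "\<dots> = 0" using inner0 by simp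
      finally show ?thesis .
    qed
    have Wnn: "W t z \<ge> 0" if t: "t \<in> U" for t z
    proof (cases "sf t z > 0")
      case True
      have L: "R - t \<ge> 0" using Rt[OF t] by simp
      have "(fst z - y1)\<^sup>2 + (snd z - y2)\<^sup>2 \<le> (R - t)\<^sup>2" using True unfolding sf_def by simp
      from energy_ineq[OF L this, of "\<Phi> (P t z)"]
      have "0 \<le> (R - t) * N (P t z) + (fst z - y1) * J1 (P t z) + (snd z - y2) * J2 (P t z)"
        unfolding N_def J1_def J2_def M1_def M2_def .
      moreover have "m t z \<ge> 0" unfolding m_def by simp
      ultimately show ?thesis unfolding W_def by simp
    next
      case False
      then have "m t z = 0" unfolding m_def by simp
      then show ?thesis unfolding W_def by simp
    qed
    have pw: "Gt t z = - W t z - K1' t z - K2' t z" if t: "t \<in> U" for t z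
    proof -
      have ph: "P t z \<in> Hs" using t U_def PH by simp
      have e: "dN (P t z) = - dJ1 (P t z) - dJ2 (P t z)" by (rule ident[OF ph])
      show ?thesis
        unfolding Gt_def W_def K1'_def K2'_def chi_def e by (simp add: power2_eq_square algebra_simps)
    qed
    have Eneg: "integral B (Gt t) \<le> 0" if t: "t \<in> U" for t
    proof -
      have "((\<lambda>z. - W t z - K1' t z - K2' t z) has_integral (- integral B (W t) - integral B (K1' t) - integral B (K2' t))) B"
        by (intro has_integral_diff has_integral_neg integrable_integral intB[OF t] cW cK1' cK2')
      moreover have "Gt t = (\<lambda>z. - W t z - K1' t z - K2' t z)" using pw[OF t] by (rule ext)
      ultimately have "integral B (Gt t) = - integral B (W t) - integral B (K1' t) - integral B (K2' t)"
        using integral_unique by metis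
      moreover have "integral B (W t) \<ge> 0" by (rule integral_nonneg[OF intB[OF t cW]]) (use Wnn[OF t] in simp)
      ultimately show ?thesis using iK1[OF t] iK2[OF t] by simp
    qed
    have t0U: "t0 \<in> U" "0 \<in> U" unfolding U_def using t0 by auto
    have contE: "continuous_on U E" by (rule DERIV_continuous_on[OF Ederiv])
    have mono: "E t0 \<le> E 0"
    proof (rule DERIV_nonpos_imp_decreasing_open[of 0 t0 E])
      show "0 \<le> t0" by (rule t0)
    next
      fix x assume x: "0 < x" "x < t0"
      have xU: "x \<in> U" using x unfolding U_def by simp
      have "at x within U = at x" unfolding U_def using at_within_Icc_at[OF x] .
      then have "(E has_real_derivative integral B (Gt x)) (at x)" using Ederiv[OF xU] by simp
      then show "\<exists>y. DERIV E x :> y \<and> y \<le> 0" using Eneg[OF xU] by blast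
    next
      show "continuous_on {0..t0} E" using contE unfolding U_def .
    qed
    have E0: "E 0 = 0"
    proof -
      have "G 0 = (\<lambda>z. 0)" unfolding G_def N_def P_def using i0 by (simp add: fun_eq_iff)
      then show ?thesis unfolding E_def by simp
    qed
    have Gnn: "G t z \<ge> 0" for t z unfolding G_def chi_def N_def by simp
    have Et0: "E t0 = 0"
    proof -
      have "E t0 \<ge> 0" unfolding E_def by (rule integral_nonneg[OF intB[OF t0U(1) cG]]) (rule Gnn)
      then show ?thesis using mono E0 by simp
    qed
    have hi: "(G t0 has_integral 0) (cbox (a1, a2) (b1, b2))"
      using integrable_integral[OF intB[OF t0U(1) cG]] Et0 unfolding E_def Bbox by simp
    have Rpos: "R > 0" unfolding R_def using t0 by simp
    have ptB: "(y1, y2) \<in> cbox (a1, a2) (b1, b2)"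
      unfolding cbox_Pair_eq a1_def a2_def b1_def b2_def using Rpos by (simp add: cbox_interval)
    have ne: "box (a1, a2) (b1, b2) \<noteq> {}"
    proof -
      have "(y1, y2) \<in> box (a1, a2) (b1, b2)"
        unfolding mem_box Basis_prod_def a1_def a2_def b1_def b2_def using Rpos by auto
      then show ?thesis by blast
    qed
    have "G t0 (y1, y2) = 0"
      by (rule has_integral_0_cbox_imp_0[OF _ _ hi ne ptB]) (use restr[OF cG t0U(1)] Bbox Gnn in auto)
    moreover have "chi t0 (y1, y2) = 1" unfolding chi_def m_def sf_def R_def by simp
    ultimately have "N p = 0" unfolding G_def P_def pe by simp
    then show ?thesis unfolding N_def by simp
  qed
qed




lemma dirac_lin2:
  assumes f: "smooth_H f" and g: "smooth_H g" and q: "q \<in> Hs"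
  shows "dirac (\<lambda>p. c *s f p - g p) q = c *s dirac f q - dirac g q"
proof -
  have h: "pd \<mu> (\<lambda>p. c *s f p - g p) q = c *s pd \<mu> f q - pd \<mu> g q" for \<mu>
    using pd_diff[OF q diff_linear[OF bl_smult smooth_diffat[OF f q]] smooth_diffat[OF g q]]
          pd_linear[OF bl_smult q smooth_diffat[OF f q]] by simp
  show ?thesis unfolding dirac_expand h
    by (simp add: vec_eq_iff forall_2 gam_mv algebra_simps)
qed

lemma pd_zero_slice:
  assumes "\<And>s. F (q + s *\<^sub>R dir \<mu>) = 0" and q: "q \<in> Hs"
  shows "pd \<mu> F q = (0::'a::real_normed_vector)"
proof -
  have "(\<lambda>s. F (q + s *\<^sub>R dir \<mu>)) = (\<lambda>s. 0)" using assms(1) by (simp add: fun_eq_iff)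
  then show ?thesis unfolding pd_def
    using vector_derivative_within[OF at0_Sdir_nonbot[OF q] has_vector_derivative_const] by simp
qed

theorem lemma2p14:
  fixes \<psi> \<Psi> :: "pt \<Rightarrow> spinor" and v :: "pt \<Rightarrow> real"
  assumes smooth: "smooth_H \<psi>" "smooth_H v" "smooth_H \<Psi>"
    and dirac_eq: "\<And>p. p \<in> Hs \<Longrightarrow> - (\<i> *s dirac \<psi> p) = v p *\<^sub>R \<psi> p"
    and kg_eq: "\<And>p. p \<in> Hs \<Longrightarrow> complex_of_real (- Box v p + v p) = hdot (\<psi> p) (gam 0 *v \<psi> p)"
    and wave_eq: "\<And>p. p \<in> Hs \<Longrightarrow> - Box \<Psi> p = \<i> *s dirac \<psi> p"
    and init0: "\<And>x1 x2. \<Psi> (0, x1, x2) = 0"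
    and init1: "\<And>x1 x2. pd 0 \<Psi> (0, x1, x2) = \<i> *s (gam 0 *v \<psi> (0, x1, x2))"
  shows
    "(\<forall>p\<in>Hs.
       - (\<i> *s dirac (\<lambda>q. \<psi> q + \<i> *s dirac (smul v \<psi>) q) p)
         = N1 \<psi> v p + N2 \<psi> p + 2 *\<^sub>R Q0 \<psi> v p)
   \<and> (\<forall>p\<in>Hs.
       - Box (\<lambda>q. \<Psi> q - v q *\<^sub>R \<psi> q) p
         = - N1 \<psi> v p - N2 \<psi> p - 2 *\<^sub>R Q0 \<psi> v p)
   \<and> (\<forall>p\<in>Hs.
       (let vt = (\<lambda>q. complex_of_real (v q) - hdot (\<psi> q) (gam 0 *v \<psi> q))
        in - Box vt p + vt p = N3 \<psi> v p + N4 \<psi> p))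
   \<and> (\<forall>I :: nat \<Rightarrow> nat. \<forall>p\<in>Hs. rad p \<noteq> 0 \<longrightarrow>
       minus_part (GamI I \<psi>) p
         = - (\<i> *s ((mat 1 - (\<Sum>a\<in>{1,2}. omega a p *\<^sub>R (gam 0 ** gam a)))
                     *v (\<Sum>b\<in>{1,2}. gam b *v Gd b (GamI I \<Psi>) p))))"
proof (intro conjI ballI allI impI)
  note \<psi> = smooth(1) and v = smooth(2) and \<Psi> = smooth(3)
  fix p assume p: "p \<in> Hs"
  show "- (\<i> *s dirac (\<lambda>q. \<psi> q + \<i> *s dirac (smul v \<psi>) q) p) = N1 \<psi> v p + N2 \<psi> p + 2 *\<^sub>R Q0 \<psi> v p"
    by (rule part_i[OF v \<psi> p dirac_eq kg_eq[OF p]])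
next
  note \<psi> = smooth(1) and v = smooth(2) and \<Psi> = smooth(3)
  fix p assume p: "p \<in> Hs"
  show "- Box (\<lambda>q. \<Psi> q - v q *\<^sub>R \<psi> q) p = - N1 \<psi> v p - N2 \<psi> p - 2 *\<^sub>R Q0 \<psi> v p"
    by (rule part_ii[OF v \<psi> \<Psi> p dirac_eq kg_eq[OF p] wave_eq[OF p]])
next
  note \<psi> = smooth(1) and v = smooth(2) and \<Psi> = smooth(3)
  fix p assume p: "p \<in> Hs"
  show "let vt = \<lambda>q. complex_of_real (v q) - hdot (\<psi> q) (gam 0 *v \<psi> q) in - Box vt p + vt p = N3 \<psi> v p + N4 \<psi> p"
    by (rule part_iii[OF v \<psi> p dirac_eq kg_eq[OF p]])
next
  note \<psi> = smooth(1) and v = smooth(2) and \<Psi> = smooth(3)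
  fix I :: "nat \<Rightarrow> nat" and p assume p: "p \<in> Hs" and r: "rad p \<noteq> 0"
  define \<Phi> where "\<Phi> = (\<lambda>q. (- \<i>) *s dirac \<Psi> q - \<psi> q)"
  have sD: "smooth_H (\<lambda>q. (- \<i>) *s dirac \<Psi> q)" by (rule smooth_linear[OF bl_smult smooth_dirac[OF \<Psi>]])
  have s\<Phi>: "smooth_H \<Phi>" unfolding \<Phi>_def by (rule smooth_diff_fun[OF sD \<psi>])
  have d\<Phi>: "dirac \<Phi> q = 0" if q: "q \<in> Hs" for q
  proof -
    have "dirac \<Phi> q = (- \<i>) *s dirac (dirac \<Psi>) q - dirac \<psi> q"
      unfolding \<Phi>_def by (rule dirac_lin2[OF smooth_dirac[OF \<Psi>] \<psi> q])
    also have "\<dots> = (- \<i>) *s (- Box \<Psi> q) - dirac \<psi> q" using dirac_dirac[OF \<Psi> q] by simp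
    also have "\<dots> = (- \<i>) *s (\<i> *s dirac \<psi> q) - dirac \<psi> q" by (simp only: wave_eq[OF q])
    also have "\<dots> = 0" by (simp add: vec_eq_iff)
    finally show ?thesis .
  qed
  have i\<Phi>: "\<Phi> (0, x1, x2) = 0" for x1 x2
  proof -
    have q: "(0, x1, x2) \<in> Hs" by (simp add: Hs_def)
    have z1: "pd 1 \<Psi> (0, x1, x2) = 0"
      by (rule pd_zero_slice[OF _ q]) (simp add: dir_def init0)
    have z2: "pd 2 \<Psi> (0, x1, x2) = 0"
      by (rule pd_zero_slice[OF _ q]) (simp add: dir_def init0)
    show ?thesis unfolding \<Phi>_def dirac_expand
      using z1 z2 init1[of x1 x2] by (simp add: vec_eq_iff forall_2 gam_mv)
  qed
  have eq: "eqH \<psi> (Dop \<Psi>)"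
    unfolding eqH_def Dop_def
    using uniqueness[OF s\<Phi> d\<Phi> i\<Phi>] by (simp add: \<Phi>_def)
  have G: "Good (GamI I)" by (rule Good_GamI)
  have "GamI I \<psi> p = GamI I (Dop \<Psi>) p" using G eq p unfolding Good_def eqH_def by blast
  also have "\<dots> = Dop (GamI I \<Psi>) p" using G \<Psi> p unfolding Good_def eqH_def by blast
  finally have X: "GamI I \<psi> p = (- \<i>) *s (gam 0 *v pd 0 (GamI I \<Psi>) p + gam 1 *v pd 1 (GamI I \<Psi>) p
                     + gam 2 *v pd 2 (GamI I \<Psi>) p)"
    unfolding Dop_def dirac_expand .
  show "minus_part (GamI I \<psi>) p
         = - (\<i> *s ((mat 1 - (\<Sum>a\<in>{1,2}. omega a p *\<^sub>R (gam 0 ** gam a)))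
                     *v (\<Sum>b\<in>{1,2}. gam b *v Gd b (GamI I \<Psi>) p)))"
    unfolding minus_part_def Gd_def
    by (rule final_algebra[OF r X])
qed


end
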